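(* Let $G$ be a finite simple graph and $L_G$ its holonomy Lie algebra. Let $v$ be a vertex of $G$, let $V$ be the set of edges of $G$ incident to $v$, let $K$ be the set of edges of $G$ both of whose endpoints are neighbours of $v$, and let $G_2$ be the graph with edge set $E(G)\setminus V$. Let $\pi:L_G\to L_{G_2}$ be the (well-defined) Lie homomorphism sending each edge in $V$ to $0$ and each other edge to itself. If $K$ is complete (i.e. any two distinct neighbours of $v$ are joined by an edge of $G$), then $\ker\pi$ is a free Lie algebra freely generated by the (images of the) edges in $V$.
   Context: All Lie algebras are over a fixed field. A triangle in a graph is a set of three edges forming a cycle of length 3. For a finite simple graph $G$ with edge set $E(G)$, the holonomy Lie algebra $L_G$ is the free Lie algebra on $E(G)$ modulo the relations $[x,y]=0$ for every pair of distinct edges $x,y$ not contained in a common triangle, and $[a,b]=[b,c]=[c,a]$ for every triangle $\{a,b,c\}$. $L_{G_2}$ is defined in the same way for the graph $G_2$. *)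

theory Defs
  imports Main
begin

datatype ('a, 'k) lterm =
    Gen 'a
  | LZero
  | LAdd "('a, 'k) lterm" "('a, 'k) lterm"
  | LSmul 'k "('a, 'k) lterm"
  | LBr "('a, 'k) lterm" "('a, 'k) lterm"

primrec gens :: "('a, 'k) lterm \<Rightarrow> 'a set" where
  "gens (Gen a) = {a}"
| "gens LZero = {}"
| "gens (LAdd s t) = gens s \<union> gens t"
| "gens (LSmul c t) = gens t"
| "gens (LBr s t) = gens s \<union> gens t"

definition lwf :: "'a set \<Rightarrow> ('a, 'k) lterm \<Rightarrow> bool" where
  "lwf X t \<longleftrightarrow> gens t \<subseteq> X"

text \<open>\<open>lie_eq X R s t\<close>: s and t are equal in the Lie algebra over the field 'k
  presented by generators X and relations R (pairs identified), i.e. the free Lie algebra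
  on X modulo the ideal generated by the relations.\<close>
inductive lie_eq :: "'a set \<Rightarrow> (('a, 'k::field) lterm \<times> ('a, 'k) lterm) set
    \<Rightarrow> ('a, 'k) lterm \<Rightarrow> ('a, 'k) lterm \<Rightarrow> bool"
  for X R where
  rel: "(s, t) \<in> R \<Longrightarrow> lwf X s \<Longrightarrow> lwf X t \<Longrightarrow> lie_eq X R s t"
| refl: "lwf X s \<Longrightarrow> lie_eq X R s s"
| sym: "lie_eq X R s t \<Longrightarrow> lie_eq X R t s"
| trans: "lie_eq X R s t \<Longrightarrow> lie_eq X R t u \<Longrightarrow> lie_eq X R s u"
| cong_add: "lie_eq X R s s' \<Longrightarrow> lie_eq X R t t' \<Longrightarrow> lie_eq X R (LAdd s t) (LAdd s' t')"
| cong_smul: "lie_eq X R s s' \<Longrightarrow> lie_eq X R (LSmul c s) (LSmul c s')"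
| cong_br: "lie_eq X R s s' \<Longrightarrow> lie_eq X R t t' \<Longrightarrow> lie_eq X R (LBr s t) (LBr s' t')"
| add_assoc: "lwf X x \<Longrightarrow> lwf X y \<Longrightarrow> lwf X z \<Longrightarrow>
     lie_eq X R (LAdd (LAdd x y) z) (LAdd x (LAdd y z))"
| add_comm: "lwf X x \<Longrightarrow> lwf X y \<Longrightarrow> lie_eq X R (LAdd x y) (LAdd y x)"
| add_zero: "lwf X x \<Longrightarrow> lie_eq X R (LAdd x LZero) x"
| add_inv: "lwf X x \<Longrightarrow> lie_eq X R (LAdd x (LSmul (-1) x)) LZero"
| smul_one: "lwf X x \<Longrightarrow> lie_eq X R (LSmul 1 x) x"
| smul_assoc: "lwf X x \<Longrightarrow> lie_eq X R (LSmul a (LSmul b x)) (LSmul (a * b) x)"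
| smul_add: "lwf X x \<Longrightarrow> lwf X y \<Longrightarrow>
     lie_eq X R (LSmul a (LAdd x y)) (LAdd (LSmul a x) (LSmul a y))"
| add_smul: "lwf X x \<Longrightarrow> lie_eq X R (LSmul (a + b) x) (LAdd (LSmul a x) (LSmul b x))"
| br_add_left: "lwf X x \<Longrightarrow> lwf X y \<Longrightarrow> lwf X z \<Longrightarrow>
     lie_eq X R (LBr (LAdd x y) z) (LAdd (LBr x z) (LBr y z))"
| br_add_right: "lwf X x \<Longrightarrow> lwf X y \<Longrightarrow> lwf X z \<Longrightarrow>
     lie_eq X R (LBr x (LAdd y z)) (LAdd (LBr x y) (LBr x z))"
| br_smul_left: "lwf X x \<Longrightarrow> lwf X y \<Longrightarrow>
     lie_eq X R (LBr (LSmul a x) y) (LSmul a (LBr x y))"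
| br_smul_right: "lwf X x \<Longrightarrow> lwf X y \<Longrightarrow>
     lie_eq X R (LBr x (LSmul a y)) (LSmul a (LBr x y))"
| br_alt: "lwf X x \<Longrightarrow> lie_eq X R (LBr x x) LZero"
| jacobi: "lwf X x \<Longrightarrow> lwf X y \<Longrightarrow> lwf X z \<Longrightarrow>
     lie_eq X R (LAdd (LBr x (LBr y z)) (LAdd (LBr y (LBr z x)) (LBr z (LBr x y)))) LZero"

definition simple_graph :: "'v set \<Rightarrow> 'v set set \<Rightarrow> bool" where
  "simple_graph Vs E \<longleftrightarrow> finite Vs \<and>
     (\<forall>e\<in>E. \<exists>a b. a \<in> Vs \<and> b \<in> Vs \<and> a \<noteq> b \<and> e = {a, b})"

definition triangle :: "'v set set \<Rightarrow> 'v set set \<Rightarrow> bool" where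
  "triangle E T \<longleftrightarrow> T \<subseteq> E \<and>
     (\<exists>x y z. x \<noteq> y \<and> y \<noteq> z \<and> x \<noteq> z \<and> T = {{x, y}, {y, z}, {x, z}})"

definition holo_rels :: "'v set set \<Rightarrow> (('v set, 'k) lterm \<times> ('v set, 'k) lterm) set" where
  "holo_rels E =
     {(LBr (Gen x) (Gen y), LZero) | x y. x \<in> E \<and> y \<in> E \<and> x \<noteq> y \<and>
         \<not> (\<exists>T. triangle E T \<and> x \<in> T \<and> y \<in> T)}
   \<union> {(LBr (Gen a) (Gen b), LBr (Gen b) (Gen c)) | a b c.
         a \<noteq> b \<and> b \<noteq> c \<and> a \<noteq> c \<and> triangle E {a, b, c}}
   \<union> {(LBr (Gen b) (Gen c), LBr (Gen c) (Gen a)) | a b c.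
         a \<noteq> b \<and> b \<noteq> c \<and> a \<noteq> c \<and> triangle E {a, b, c}}"

text \<open>Equality in the holonomy Lie algebra L_G of the graph with edge set E
  (elements of L_G are represented by expressions t with lwf E t).\<close>
abbreviation holo_eq :: "'v set set \<Rightarrow> ('v set, 'k::field) lterm \<Rightarrow> ('v set, 'k) lterm \<Rightarrow> bool" where
  "holo_eq E \<equiv> lie_eq E (holo_rels E)"

text \<open>The substitution sending the generators in V to 0 and fixing the other generators;
  on representatives this is the homomorphism \<pi>.\<close>
primrec kill :: "'a set \<Rightarrow> ('a, 'k) lterm \<Rightarrow> ('a, 'k) lterm" where
  "kill V (Gen a) = (if a \<in> V then LZero else Gen a)"
| "kill V LZero = LZero"
| "kill V (LAdd s t) = LAdd (kill V s) (kill V t)"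
| "kill V (LSmul c t) = LSmul c (kill V t)"
| "kill V (LBr s t) = LBr (kill V s) (kill V t)"

end

theory Submission
  imports Defs
begin

declare lie_eq.trans[trans]

abbreviation lsub :: "('a,'k::field) lterm \<Rightarrow> ('a,'k) lterm \<Rightarrow> ('a,'k) lterm" where
  "lsub a b \<equiv> LAdd a (LSmul (-1) b)"

lemma lwf_simps[simp]:
  "lwf X (Gen a) \<longleftrightarrow> a \<in> X"
  "lwf X LZero"
  "lwf X (LAdd s t) \<longleftrightarrow> lwf X s \<and> lwf X t"
  "lwf X (LSmul c t) \<longleftrightarrow> lwf X t"
  "lwf X (LBr s t) \<longleftrightarrow> lwf X s \<and> lwf X t"
  by (auto simp: lwf_def)

lemma lie_eq_lwf: "lie_eq X R s t \<Longrightarrow> lwf X s \<and> lwf X t"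
  by (induction rule: lie_eq.induct) auto

lemma lie_eq_lwf1: "lie_eq X R s t \<Longrightarrow> lwf X s" and lie_eq_lwf2: "lie_eq X R s t \<Longrightarrow> lwf X t"
  using lie_eq_lwf by blast+

lemmas add_zero_s = lie_eq.add_zero[THEN lie_eq.sym]
lemmas add_assoc_s = lie_eq.add_assoc[THEN lie_eq.sym]
lemmas add_smul_s = lie_eq.add_smul[THEN lie_eq.sym]
lemmas smul_assoc_s = lie_eq.smul_assoc[THEN lie_eq.sym]
lemmas smul_add_s = lie_eq.smul_add[THEN lie_eq.sym]

lemmas le_intros = lie_eq.cong_add lie_eq.cong_smul lie_eq.cong_br lie_eq.refl

lemma zero_of_double:
  assumes "lie_eq X R a (LAdd a a)"
  shows "lie_eq X R a LZero"
proof -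
  have wa: "lwf X a" using lie_eq_lwf assms by blast
  have "lie_eq X R LZero (LAdd a (LSmul (-1) a))" by (rule lie_eq.sym, rule lie_eq.add_inv, fact)
  also have "lie_eq X R \<dots> (LAdd (LAdd a a) (LSmul (-1) a))"
    using assms wa by (intro le_intros) auto
  also have "lie_eq X R \<dots> (LAdd a (LAdd a (LSmul (-1) a)))"
    using wa by (intro lie_eq.add_assoc) auto
  also have "lie_eq X R \<dots> (LAdd a LZero)"
    using wa by (intro le_intros lie_eq.add_inv) auto
  also have "lie_eq X R \<dots> a" using wa by (rule lie_eq.add_zero)
  finally show ?thesis by (rule lie_eq.sym)
qed

lemma add_zero_left: "lwf X a \<Longrightarrow> lie_eq X R (LAdd LZero a) a"
  by (meson lie_eq.add_comm lie_eq.add_zero lie_eq.trans lwf_simps(2))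

lemma smul_zero: "lie_eq X R (LSmul c LZero) LZero"
proof (rule zero_of_double)
  have "lie_eq X R (LSmul c LZero) (LSmul c (LAdd LZero LZero))"
    by (intro le_intros add_zero_s) auto
  also have "lie_eq X R \<dots> (LAdd (LSmul c LZero) (LSmul c LZero))"
    by (rule lie_eq.smul_add) auto
  finally show "lie_eq X R (LSmul c LZero) (LAdd (LSmul c LZero) (LSmul c LZero))" .
qed

lemma zero_smul: "lwf X a \<Longrightarrow> lie_eq X R (LSmul 0 a) LZero"
proof (rule zero_of_double)
  assume a: "lwf X a"
  have "lie_eq X R (LSmul 0 a) (LSmul (0+0) a)" using a by (simp add: lie_eq.refl)
  also have "lie_eq X R \<dots> (LAdd (LSmul 0 a) (LSmul 0 a))"
    using a by (rule lie_eq.add_smul)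
  finally show "lie_eq X R (LSmul 0 a) (LAdd (LSmul 0 a) (LSmul 0 a))" .
qed

lemma br_zero_left: "lwf X a \<Longrightarrow> lie_eq X R (LBr LZero a) LZero"
proof (rule zero_of_double)
  assume a: "lwf X a"
  have "lie_eq X R (LBr LZero a) (LBr (LAdd LZero LZero) a)"
    using a by (intro le_intros add_zero_s) auto
  also have "lie_eq X R \<dots> (LAdd (LBr LZero a) (LBr LZero a))"
    using a by (intro lie_eq.br_add_left) auto
  finally show "lie_eq X R (LBr LZero a) (LAdd (LBr LZero a) (LBr LZero a))" .
qed

lemma br_zero_right: "lwf X a \<Longrightarrow> lie_eq X R (LBr a LZero) LZero"
proof (rule zero_of_double)
  assume a: "lwf X a"
  have "lie_eq X R (LBr a LZero) (LBr a (LAdd LZero LZero))"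
    using a by (intro le_intros add_zero_s) auto
  also have "lie_eq X R \<dots> (LAdd (LBr a LZero) (LBr a LZero))"
    using a by (intro lie_eq.br_add_right) auto
  finally show "lie_eq X R (LBr a LZero) (LAdd (LBr a LZero) (LBr a LZero))" .
qed

lemma add_swap:
  assumes "lwf X a" "lwf X b" "lwf X r"
  shows "lie_eq X R (LAdd a (LAdd b r)) (LAdd b (LAdd a r))"
proof -
  have "lie_eq X R (LAdd a (LAdd b r)) (LAdd (LAdd a b) r)"
    using assms by (intro add_assoc_s)
  also have "lie_eq X R \<dots> (LAdd (LAdd b a) r)"
    using assms by (intro le_intros lie_eq.add_comm) auto
  also have "lie_eq X R \<dots> (LAdd b (LAdd a r))"
    using assms by (intro lie_eq.add_assoc)
  finally show ?thesis .
qed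

lemma add_combine:
  assumes "lwf X p" "lwf X r"
  shows "lie_eq X R (LAdd (LSmul c p) (LAdd (LSmul d p) r)) (LAdd (LSmul (c+d) p) r)"
proof -
  have "lie_eq X R (LAdd (LSmul c p) (LAdd (LSmul d p) r)) (LAdd (LAdd (LSmul c p) (LSmul d p)) r)"
    using assms by (intro add_assoc_s) auto
  also have "lie_eq X R \<dots> (LAdd (LSmul (c+d) p) r)"
    using assms by (intro le_intros add_smul_s) auto
  finally show ?thesis .
qed

datatype 'a btree = BL 'a | BN "'a btree" "'a btree"

primrec tm :: "'a btree \<Rightarrow> ('a,'k) lterm" where
  "tm (BL a) = Gen a" | "tm (BN p q) = LBr (tm p) (tm q)"

primrec leaves :: "'a btree \<Rightarrow> 'a set" where
  "leaves (BL a) = {a}" | "leaves (BN p q) = leaves p \<union> leaves q"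

lemma lwf_tm[simp]: "lwf X (tm p) \<longleftrightarrow> leaves p \<subseteq> X"
  by (induction p) auto

fun sumt :: "('a btree \<times> 'k) list \<Rightarrow> ('a,'k) lterm" where
  "sumt [] = LZero" | "sumt ((p,c)#xs) = LAdd (LSmul c (tm p)) (sumt xs)"

definition okl :: "'a set \<Rightarrow> ('a btree \<times> 'k) list \<Rightarrow> bool" where
  "okl X xs \<longleftrightarrow> (\<forall>pc\<in>set xs. leaves (fst pc) \<subseteq> X)"

lemma okl_simps[simp]: "okl X []" "okl X ((p,c)#xs) \<longleftrightarrow> leaves p \<subseteq> X \<and> okl X xs"
  "okl X (xs @ ys) \<longleftrightarrow> okl X xs \<and> okl X ys"
  by (auto simp: okl_def)

lemma lwf_sumt[simp]: "lwf X (sumt xs) \<longleftrightarrow> okl X xs"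
  by (induction xs rule: sumt.induct) auto

primrec mons :: "('a,'k::field) lterm \<Rightarrow> ('a btree \<times> 'k) list" where
  "mons (Gen a) = [(BL a, 1)]"
| "mons LZero = []"
| "mons (LAdd s t) = mons s @ mons t"
| "mons (LSmul c t) = map (\<lambda>(p,d). (p, c*d)) (mons t)"
| "mons (LBr s t) = concat (map (\<lambda>(p,c). map (\<lambda>(q,d). (BN p q, c*d)) (mons t)) (mons s))"

lemma okl_map_scale[simp]: "okl X (map (\<lambda>(p,d). (p, c*d)) xs) = okl X xs"
  by (induction xs) auto

lemma okl_inner: "leaves p \<subseteq> X \<Longrightarrow> okl X ys \<Longrightarrow> okl X (map (\<lambda>(q,d). (BN p q, c*d)) ys)"
  by (induction ys) auto

lemma okl_prod: "okl X xs \<Longrightarrow> okl X ys \<Longrightarrow>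
   okl X (concat (map (\<lambda>(p,c). map (\<lambda>(q,d). (BN p q, c*d)) ys) xs))"
  by (induction xs) (auto simp: okl_inner)

lemma okl_mons: "lwf X t \<Longrightarrow> okl X (mons t)"
  by (induction t) (simp_all add: okl_prod)

lemma sumt_append: "okl X xs \<Longrightarrow> okl X ys \<Longrightarrow>
  lie_eq X R (sumt (xs @ ys)) (LAdd (sumt xs) (sumt ys))"
proof (induction xs rule: sumt.induct)
  case 1
  then show ?case by (simp, intro lie_eq.sym[OF add_zero_left]) simp
next
  case (2 p c xs)
  have "lie_eq X R (sumt (((p,c)#xs) @ ys)) (LAdd (LSmul c (tm p)) (LAdd (sumt xs) (sumt ys)))"
    unfolding append_Cons sumt.simps using 2 by (intro le_intros 2(1)) auto
  also have "lie_eq X R \<dots> (LAdd (sumt ((p,c)#xs)) (sumt ys))"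
    unfolding sumt.simps using 2 by (intro add_assoc_s) auto
  finally show ?case .
qed

lemma sumt_smul: "okl X xs \<Longrightarrow>
  lie_eq X R (sumt (map (\<lambda>(p,d). (p, c*d)) xs)) (LSmul c (sumt xs))"
proof (induction xs rule: sumt.induct)
  case 1
  then show ?case by (simp add: lie_eq.sym smul_zero)
next
  case (2 p d xs)
  have "lie_eq X R (sumt (map (\<lambda>(p,d). (p, c*d)) ((p,d)#xs)))
      (LAdd (LSmul c (LSmul d (tm p))) (LSmul c (sumt xs)))"
    unfolding list.map sumt.simps prod.case using 2 by (intro le_intros smul_assoc_s 2(1)) auto
  also have "lie_eq X R \<dots> (LSmul c (sumt ((p,d)#xs)))"
    unfolding sumt.simps using 2 by (intro smul_add_s) auto
  finally show ?case .
qed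

lemma br_smul_smul: "lwf X a \<Longrightarrow> lwf X b \<Longrightarrow>
  lie_eq X R (LBr (LSmul c a) (LSmul d b)) (LSmul (c*d) (LBr a b))"
proof -
  assume a: "lwf X a" "lwf X b"
  have "lie_eq X R (LBr (LSmul c a) (LSmul d b)) (LSmul c (LBr a (LSmul d b)))"
    using a by (intro lie_eq.br_smul_left) auto
  also have "lie_eq X R \<dots> (LSmul c (LSmul d (LBr a b)))"
    using a by (intro le_intros lie_eq.br_smul_right) auto
  also have "lie_eq X R \<dots> (LSmul (c*d) (LBr a b))"
    using a by (intro lie_eq.smul_assoc) auto
  finally show ?thesis .
qed

lemma sumt_br_right: "leaves p \<subseteq> X \<Longrightarrow> okl X ys \<Longrightarrow>
  lie_eq X R (LBr (LSmul c (tm p)) (sumt ys)) (sumt (map (\<lambda>(q,d). (BN p q, c*d)) ys))"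
proof (induction ys rule: sumt.induct)
  case 1
  then show ?case by (simp add: br_zero_right)
next
  case (2 q d ys)
  have "lie_eq X R (LBr (LSmul c (tm p)) (sumt ((q,d)#ys)))
     (LAdd (LBr (LSmul c (tm p)) (LSmul d (tm q))) (LBr (LSmul c (tm p)) (sumt ys)))"
    unfolding sumt.simps by (rule lie_eq.br_add_right) (use 2 in auto)
  also have "lie_eq X R \<dots> (LAdd (LSmul (c*d) (tm (BN p q))) (sumt (map (\<lambda>(q,d). (BN p q, c*d)) ys)))"
    unfolding tm.simps using 2 by (intro le_intros br_smul_smul 2(1)) auto
  finally show ?case by simp
qed

lemma sumt_br: "okl X xs \<Longrightarrow> okl X ys \<Longrightarrow>
  lie_eq X R (LBr (sumt xs) (sumt ys))
    (sumt (concat (map (\<lambda>(p,c). map (\<lambda>(q,d). (BN p q, c*d)) ys) xs)))"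
proof (induction xs rule: sumt.induct)
  case 1
  then show ?case by (simp add: br_zero_left)
next
  case (2 p c xs)
  let ?A = "map (\<lambda>(q,d). (BN p q, c*d)) ys"
  let ?B = "concat (map (\<lambda>(p,c). map (\<lambda>(q,d). (BN p q, c*d)) ys) xs)"
  have ok: "okl X ?A" "okl X ?B" using 2 okl_prod[of X "[(p,c)]" ys] okl_prod[of X xs ys] by auto
  have "lie_eq X R (LBr (sumt ((p,c)#xs)) (sumt ys))
     (LAdd (LBr (LSmul c (tm p)) (sumt ys)) (LBr (sumt xs) (sumt ys)))"
    unfolding sumt.simps by (rule lie_eq.br_add_left) (use 2 in auto)
  also have "lie_eq X R \<dots> (LAdd (sumt ?A) (sumt ?B))"
    using 2 by (intro le_intros sumt_br_right 2(1)) auto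
  also have "lie_eq X R \<dots> (sumt (?A @ ?B))"
    by (rule lie_eq.sym[OF sumt_append[OF ok]])
  finally show ?case by simp
qed

lemma sumt_mons: "lwf X t \<Longrightarrow> lie_eq X R t (sumt (mons t))"
proof (induction t)
  case (Gen a)
  have "lie_eq X R (Gen a) (LSmul 1 (Gen a))" using Gen by (intro lie_eq.smul_one[THEN lie_eq.sym]) simp
  also have "lie_eq X R \<dots> (LAdd (LSmul 1 (Gen a)) LZero)" using Gen by (intro add_zero_s) simp
  finally show ?case by simp
next
  case LZero
  then show ?case by (simp add: lie_eq.refl)
next
  case (LAdd s t)
  then have "lie_eq X R (LAdd s t) (LAdd (sumt (mons s)) (sumt (mons t)))" by (intro le_intros) auto
  also have "lie_eq X R \<dots> (sumt (mons s @ mons t))"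
    using LAdd by (intro lie_eq.sym[OF sumt_append] okl_mons) auto
  finally show ?case by simp
next
  case (LSmul c t)
  then have "lie_eq X R (LSmul c t) (LSmul c (sumt (mons t)))" by (intro le_intros) auto
  also have "lie_eq X R \<dots> (sumt (map (\<lambda>(p,d). (p, c*d)) (mons t)))"
    using LSmul by (intro lie_eq.sym[OF sumt_smul] okl_mons) auto
  finally show ?case by simp
next
  case (LBr s t)
  then have "lie_eq X R (LBr s t) (LBr (sumt (mons s)) (sumt (mons t)))" by (intro le_intros) auto
  also have "lie_eq X R \<dots> (sumt (mons (LBr s t)))"
    using LBr by simp (intro sumt_br okl_mons, auto)
  finally show ?case .
qed

definition coef :: "('a btree \<times> 'k::field) list \<Rightarrow> 'a btree \<Rightarrow> 'k" where
  "coef xs p = sum_list (map snd (filter (\<lambda>qc. fst qc = p) xs))"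

lemma coef_simps[simp]: "coef [] p = 0"
  "coef ((q,d)#xs) p = (if q = p then d else 0) + coef xs p"
  "coef (xs @ ys) p = coef xs p + coef ys p"
  by (auto simp: coef_def)

lemma coef_scale[simp]: "coef (map (\<lambda>(p,d). (p, c*d)) xs) p = c * coef xs p"
  by (induction xs) (auto simp: algebra_simps)

lemma coef_filter: "coef (filter (\<lambda>(q,_). q \<noteq> p) xs) r = (if r = p then 0 else coef xs r)"
  by (induction xs) auto

lemma coef_inner: "coef (map (\<lambda>(q,d). (BN p q, c*d)) ys) r =
   (case r of BL _ \<Rightarrow> 0 | BN p' q \<Rightarrow> if p' = p then c * coef ys q else 0)"
  by (induction ys) (auto split: btree.split simp: algebra_simps)

lemma coef_prod: "coef (concat (map (\<lambda>(p,c). map (\<lambda>(q,d). (BN p q, c*d)) ys) xs)) r =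
   (case r of BL _ \<Rightarrow> 0 | BN p q \<Rightarrow> coef xs p * coef ys q)"
  by (induction xs) (auto split: btree.split simp: algebra_simps coef_inner)

primrec nf :: "('a,'k::field) lterm \<Rightarrow> 'a btree \<Rightarrow> 'k" where
  "nf (Gen a) = (\<lambda>p. if p = BL a then 1 else 0)"
| "nf LZero = (\<lambda>p. 0)"
| "nf (LAdd s t) = (\<lambda>p. nf s p + nf t p)"
| "nf (LSmul c t) = (\<lambda>p. c * nf t p)"
| "nf (LBr s t) = (\<lambda>p. case p of BL a \<Rightarrow> 0 | BN p1 p2 \<Rightarrow> nf s p1 * nf t p2)"

lemma coef_mons: "coef (mons t) = nf t"
  by (induction t) (auto simp: coef_prod fun_eq_iff split: btree.split)

lemma extract_mon: "okl X xs \<Longrightarrow> leaves p \<subseteq> X \<Longrightarrow>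
  lie_eq X R (sumt xs) (LAdd (LSmul (coef xs p) (tm p)) (sumt (filter (\<lambda>(q,_). q \<noteq> p) xs)))"
proof (induction xs rule: sumt.induct)
  case 1
  have "lie_eq X R LZero (LSmul 0 (tm p))" by (rule lie_eq.sym, rule zero_smul) (use 1 in simp)
  also have "lie_eq X R \<dots> (LAdd (LSmul 0 (tm p)) LZero)" by (rule add_zero_s) (use 1 in simp)
  finally show ?case by simp
next
  case (2 q d xs)
  show ?case
  proof (cases "q = p")
    case True
    have "lie_eq X R (sumt ((q,d)#xs)) (LAdd (LSmul d (tm p))
       (LAdd (LSmul (coef xs p) (tm p)) (sumt (filter (\<lambda>(q,_). q \<noteq> p) xs))))"
      unfolding sumt.simps True using 2 by (intro le_intros 2(1)) auto
    also have "lie_eq X R \<dots> (LAdd (LSmul (d + coef xs p) (tm p)) (sumt (filter (\<lambda>(q,_). q \<noteq> p) xs)))"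
      using 2 by (intro add_combine) (auto simp: okl_def)
    finally show ?thesis using True by simp
  next
    case False
    have "lie_eq X R (sumt ((q,d)#xs)) (LAdd (LSmul d (tm q))
       (LAdd (LSmul (coef xs p) (tm p)) (sumt (filter (\<lambda>(q,_). q \<noteq> p) xs))))"
      unfolding sumt.simps using 2 False by (intro le_intros 2(1)) auto
    also have "lie_eq X R \<dots> (LAdd (LSmul (coef xs p) (tm p)) (LAdd (LSmul d (tm q)) (sumt (filter (\<lambda>(q,_). q \<noteq> p) xs))))"
      using 2 by (intro add_swap) (auto simp: okl_def)
    finally show ?thesis using False by simp
  qed
qed

lemma sumt_coef_eq:
  "okl X xs \<Longrightarrow> okl X ys \<Longrightarrow> coef xs = coef ys \<Longrightarrow> lie_eq X R (sumt xs) (sumt ys)"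
proof (induction "length xs + length ys" arbitrary: xs ys rule: less_induct)
  case less
  show ?case
  proof (cases "xs @ ys = []")
    case True
    then show ?thesis by (simp add: lie_eq.refl)
  next
    case False
    define p where "p = fst (hd (xs @ ys))"
    have pin: "p \<in> fst ` set (xs @ ys)" using False unfolding p_def
      by (metis hd_in_set image_eqI)
    then have lp: "leaves p \<subseteq> X" using less.prems by (auto simp: okl_def)
    define xs' where "xs' = filter (\<lambda>(q,_). q \<noteq> p) xs"
    define ys' where "ys' = filter (\<lambda>(q,_). q \<noteq> p) ys"
    have lx: "length xs' \<le> length xs" "length ys' \<le> length ys"
      unfolding xs'_def ys'_def by auto
    have "length xs' + length ys' < length xs + length ys"
    proof -
      from pin obtain c where "(p,c) \<in> set xs \<or> (p,c) \<in> set ys" by force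
      then have "length xs' < length xs \<or> length ys' < length ys"
        unfolding xs'_def ys'_def
        using length_filter_less[of "(p,c)" xs "(\<lambda>(q,_). q \<noteq> p)"]
          length_filter_less[of "(p,c)" ys "(\<lambda>(q,_). q \<noteq> p)"] by auto
      then show ?thesis using lx by linarith
    qed
    moreover have ok': "okl X xs'" "okl X ys'" using less.prems by (auto simp: okl_def xs'_def ys'_def)
    moreover have "coef xs' = coef ys'" using less.prems(3)
      by (auto simp: fun_eq_iff xs'_def ys'_def coef_filter)
    ultimately have IH: "lie_eq X R (sumt xs') (sumt ys')" using less.hyps by blast
    have "lie_eq X R (sumt xs) (LAdd (LSmul (coef xs p) (tm p)) (sumt xs'))"
      unfolding xs'_def by (rule extract_mon) (use less.prems lp in auto)
    also have "lie_eq X R \<dots> (LAdd (LSmul (coef ys p) (tm p)) (sumt ys'))"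
      unfolding less.prems(3) using IH lp by (intro le_intros) auto
    also have "lie_eq X R \<dots> (sumt ys)"
      unfolding ys'_def apply (rule lie_eq.sym) apply (rule extract_mon) using less.prems lp by auto
    finally show ?thesis .
  qed
qed

lemma lin: "lwf X a \<Longrightarrow> lwf X b \<Longrightarrow> nf a = nf b \<Longrightarrow> lie_eq X R a b"
proof -
  assume a: "lwf X a" "lwf X b" "nf a = nf b"
  have "lie_eq X R a (sumt (mons a))" using a by (intro sumt_mons)
  also have "lie_eq X R \<dots> (sumt (mons b))" using a by (intro sumt_coef_eq okl_mons) (auto simp: coef_mons)
  also have "lie_eq X R \<dots> b" using a by (intro lie_eq.sym[OF sumt_mons])
  finally show ?thesis .
qed

lemma lin2: "lwf X a \<Longrightarrow> lwf X b \<Longrightarrow> (\<And>x. nf a (BL x) = nf b (BL x)) \<Longrightarrow>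
   (\<And>p q. nf a (BN p q) = nf b (BN p q)) \<Longrightarrow> lie_eq X R a b"
  apply (rule lin, assumption+)
  apply (rule ext)
  subgoal for p by (cases p) auto
  done

abbreviation jac :: "('a,'k::field) lterm \<Rightarrow> ('a,'k) lterm \<Rightarrow> ('a,'k) lterm \<Rightarrow> ('a,'k) lterm" where
  "jac x y z \<equiv> LAdd (LBr x (LBr y z)) (LAdd (LBr y (LBr z x)) (LBr z (LBr x y)))"

abbreviation anti :: "('a,'k::field) lterm \<Rightarrow> ('a,'k) lterm \<Rightarrow> ('a,'k) lterm" where
  "anti a b \<equiv> LAdd (LBr a b) (LBr b a)"

lemma anticomm:
  assumes "lwf X a" "lwf X b"
  shows "lie_eq X R (anti a b) LZero"
proof -
  have "lie_eq X R (anti a b) (lsub (LBr (LAdd a b) (LAdd a b)) (LAdd (LBr a a) (LBr b b)))"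
    using assms by (intro lin2) (auto simp: algebra_simps)
  also have "lie_eq X R \<dots> (lsub LZero (LAdd LZero LZero))"
    using assms by (intro le_intros lie_eq.br_alt) auto
  also have "lie_eq X R \<dots> LZero"
    by (intro lin2) auto
  finally show ?thesis .
qed

lemma jacobi': 
  assumes "lwf X a" "lwf X b" "lwf X c"
  shows "lie_eq X R (LBr a (LBr b c)) (LAdd (LBr (LBr a b) c) (LBr b (LBr a c)))"
proof -
  have "lie_eq X R (LBr a (LBr b c)) (LAdd (jac a b c) (lsub (LAdd (LBr (LBr a b) c) (LBr b (LBr a c)))
           (LAdd (anti (LBr a b) c) (LBr b (anti c a)))))"
    using assms by (intro lin2) (auto simp: algebra_simps)
  also have "lie_eq X R \<dots> (LAdd LZero (lsub (LAdd (LBr (LBr a b) c) (LBr b (LBr a c)))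
           (LAdd LZero (LBr b LZero))))"
    using assms by (intro le_intros lie_eq.jacobi anticomm) auto
  also have "lie_eq X R \<dots> (LAdd (LBr (LBr a b) c) (LBr b (LBr a c)))"
    using assms by (intro lin2) (auto simp: algebra_simps)
  finally show ?thesis .
qed

primrec Dext :: "('a \<Rightarrow> ('a,'k::field) lterm) \<Rightarrow> ('a,'k) lterm \<Rightarrow> ('a,'k) lterm" where
  "Dext f (Gen a) = f a"
| "Dext f LZero = LZero"
| "Dext f (LAdd s t) = LAdd (Dext f s) (Dext f t)"
| "Dext f (LSmul c t) = LSmul c (Dext f t)"
| "Dext f (LBr s t) = LAdd (LBr (Dext f s) t) (LBr s (Dext f t))"

lemma lwf_Dext: "\<forall>a\<in>Y. lwf Y (f a) \<Longrightarrow> lwf Y t \<Longrightarrow> lwf Y (Dext f t)"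
  by (induction t) auto

lemma Dext_resp:
  assumes f: "\<forall>a\<in>Y. lwf Y (f a)"
  shows "lie_eq Y {} s t \<Longrightarrow> lie_eq Y {} (Dext f s) (Dext f t)"
proof (induction rule: lie_eq.induct)
  case (rel s t)
  then show ?case by simp
next
  case (refl s)
  then show ?case using f by (simp add: lie_eq.refl lwf_Dext)
next
  case (sym s t)
  show ?case by (rule lie_eq.sym[OF sym.IH])
next
  case (trans s t u)
  show ?case by (rule lie_eq.trans[OF trans.IH])
next
  case (cong_add s s' t t')
  then show ?case by (simp add: lie_eq.cong_add)
next
  case (cong_smul s s' c)
  then show ?case by (simp add: lie_eq.cong_smul)
next
  case (cong_br s s' t t')
  then show ?case using lie_eq_lwf
    by (simp add: lie_eq.cong_add lie_eq.cong_br)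
next
  case (add_assoc x y z)
  then show ?case using lwf_Dext[OF f] by (simp add: lie_eq.add_assoc)
next
  case (add_comm x y)
  then show ?case using lwf_Dext[OF f] by (simp add: lie_eq.add_comm)
next
  case (add_zero x)
  then show ?case using lwf_Dext[OF f] by (simp add: lie_eq.add_zero)
next
  case (add_inv x)
  then show ?case using lwf_Dext[OF f] by (simp add: lie_eq.add_inv)
next
  case (smul_one x)
  then show ?case using lwf_Dext[OF f] by (simp add: lie_eq.smul_one)
next
  case (smul_assoc x a b)
  then show ?case using lwf_Dext[OF f] by (simp add: lie_eq.smul_assoc)
next
  case (smul_add x y a)
  then show ?case using lwf_Dext[OF f] by (simp add: lie_eq.smul_add)
next
  case (add_smul x a b)
  then show ?case using lwf_Dext[OF f] by (simp add: lie_eq.add_smul)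
next
  case (br_add_left x y z)
  then show ?case using f lwf_Dext[OF f] by simp (intro lin2, auto simp: algebra_simps)
next
  case (br_add_right x y z)
  then show ?case using f lwf_Dext[OF f] by simp (intro lin2, auto simp: algebra_simps)
next
  case (br_smul_left x y a)
  then show ?case using f lwf_Dext[OF f] by simp (intro lin2, auto simp: algebra_simps)
next
  case (br_smul_right x y a)
  then show ?case using f lwf_Dext[OF f] by simp (intro lin2, auto simp: algebra_simps)
next
  case (br_alt x)
  then show ?case using f lwf_Dext[OF f] by (simp add: anticomm)
next
  case (jacobi x y z)
  have w: "lwf Y (Dext f x)" "lwf Y (Dext f y)" "lwf Y (Dext f z)" using jacobi lwf_Dext[OF f] by auto
  have "lie_eq Y {} (Dext f (jac x y z))
     (LAdd (jac (Dext f x) y z) (LAdd (jac x (Dext f y) z) (jac x y (Dext f z))))"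
    using jacobi w by simp (intro lin2, auto simp: algebra_simps)
  also have "lie_eq Y {} \<dots> (LAdd LZero (LAdd LZero LZero))"
    using jacobi w by (intro le_intros lie_eq.jacobi) auto
  also have "lie_eq Y {} \<dots> LZero" by (intro lin2) auto
  finally show ?case by simp
qed

definition isder :: "'a set \<Rightarrow> (('a,'k::field) lterm \<Rightarrow> ('a,'k) lterm) \<Rightarrow> bool" where
  "isder Y A \<longleftrightarrow> (\<forall>u. lwf Y u \<longrightarrow> lwf Y (A u))
     \<and> (\<forall>u u'. lie_eq Y {} u u' \<longrightarrow> lie_eq Y {} (A u) (A u'))
     \<and> (\<forall>a b. lwf Y a \<longrightarrow> lwf Y b \<longrightarrow> lie_eq Y {} (A (LAdd a b)) (LAdd (A a) (A b)))
     \<and> (\<forall>c a. lwf Y a \<longrightarrow> lie_eq Y {} (A (LSmul c a)) (LSmul c (A a)))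
     \<and> (\<forall>a b. lwf Y a \<longrightarrow> lwf Y b \<longrightarrow> lie_eq Y {} (A (LBr a b)) (LAdd (LBr (A a) b) (LBr a (A b))))"

lemma isderD:
  assumes "isder Y A"
  shows "lwf Y u \<Longrightarrow> lwf Y (A u)"
    and "lie_eq Y {} u u' \<Longrightarrow> lie_eq Y {} (A u) (A u')"
    and "lwf Y a \<Longrightarrow> lwf Y b \<Longrightarrow> lie_eq Y {} (A (LAdd a b)) (LAdd (A a) (A b))"
    and "lwf Y a \<Longrightarrow> lie_eq Y {} (A (LSmul c a)) (LSmul c (A a))"
    and "lwf Y a \<Longrightarrow> lwf Y b \<Longrightarrow> lie_eq Y {} (A (LBr a b)) (LAdd (LBr (A a) b) (LBr a (A b)))"
  using assms unfolding isder_def by blast+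

lemma isder_sub:
  assumes A: "isder Y A" and w: "lwf Y a" "lwf Y b"
  shows "lie_eq Y {} (A (lsub a b)) (lsub (A a) (A b))"
proof -
  have "lie_eq Y {} (A (lsub a b)) (LAdd (A a) (A (LSmul (-1) b)))"
    using w by (intro isderD(3)[OF A]) auto
  also have "lie_eq Y {} \<dots> (lsub (A a) (A b))"
    using w isderD(1)[OF A] by (intro le_intros isderD(4)[OF A]) auto
  finally show ?thesis .
qed

lemma isder_zero:
  assumes A: "isder Y A"
  shows "lie_eq Y {} (A LZero) LZero"
proof -
  have w: "lwf Y (A LZero)" using isderD(1)[OF A] by simp
  have "lie_eq Y {} (A LZero) (A (LSmul 0 LZero))"
    by (intro isderD(2)[OF A] lin2) auto
  also have "lie_eq Y {} \<dots> (LSmul 0 (A LZero))"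
    by (intro isderD(4)[OF A]) auto
  also have "lie_eq Y {} \<dots> LZero"
    using w by (intro lin2) auto
  finally show ?thesis .
qed

lemma isder_P:
  assumes A: "isder Y A" and w: "lwf Y a" "lwf Y b" "lwf Y c" "lwf Y d"
  shows "lie_eq Y {} (A (LAdd (lsub a b) (LBr c d)))
     (LAdd (lsub (A a) (A b)) (LAdd (LBr (A c) d) (LBr c (A d))))"
proof -
  have "lie_eq Y {} (A (LAdd (lsub a b) (LBr c d))) (LAdd (A (lsub a b)) (A (LBr c d)))"
    using w by (intro isderD(3)[OF A]) auto
  also have "lie_eq Y {} \<dots> (LAdd (lsub (A a) (A b)) (LAdd (LBr (A c) d) (LBr c (A d))))"
    using w by (intro le_intros isder_sub[OF A] isderD(5)[OF A]) auto
  finally show ?thesis .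
qed

lemma isder_Dext: "\<forall>a\<in>Y. lwf Y (f a) \<Longrightarrow> isder Y (Dext f)"
  unfolding isder_def using lwf_Dext Dext_resp
  by (auto intro!: lie_eq.refl simp: lwf_Dext)

lemma isder_0: "isder Y (\<lambda>u. LZero)"
  unfolding isder_def by (auto intro!: lin2 lie_eq.refl)

lemma isder_add:
  assumes A: "isder Y A" and B: "isder Y B"
  shows "isder Y (\<lambda>u. LAdd (A u) (B u))"
  unfolding isder_def
proof (intro conjI allI impI)
  note a1 = isderD(1)[OF A] and b1 = isderD(1)[OF B]
  show "lwf Y (LAdd (A u) (B u))" if "lwf Y u" for u using that a1 b1 by simp
  show "lie_eq Y {} (LAdd (A u) (B u)) (LAdd (A u') (B u'))" if "lie_eq Y {} u u'" for u u'
    using that by (intro lie_eq.cong_add isderD(2)[OF A] isderD(2)[OF B])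
  fix a b :: "('a,'b) lterm" assume w: "lwf Y a" "lwf Y b"
  show "lie_eq Y {} (LAdd (A (LAdd a b)) (B (LAdd a b))) (LAdd (LAdd (A a) (B a)) (LAdd (A b) (B b)))"
    apply (rule lie_eq.trans[OF lie_eq.cong_add[OF isderD(3)[OF A w] isderD(3)[OF B w]]])
    using w a1 b1 by (intro lin2) (auto simp: algebra_simps)
  show "lie_eq Y {} (LAdd (A (LBr a b)) (B (LBr a b)))
     (LAdd (LBr (LAdd (A a) (B a)) b) (LBr a (LAdd (A b) (B b))))"
    apply (rule lie_eq.trans[OF lie_eq.cong_add[OF isderD(5)[OF A w] isderD(5)[OF B w]]])
    using w a1 b1 by (intro lin2) (auto simp: algebra_simps)
next
  note a1 = isderD(1)[OF A] and b1 = isderD(1)[OF B]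
  fix c and a :: "('a,'b) lterm" assume w: "lwf Y a"
  show "lie_eq Y {} (LAdd (A (LSmul c a)) (B (LSmul c a))) (LSmul c (LAdd (A a) (B a)))"
    apply (rule lie_eq.trans[OF lie_eq.cong_add[OF isderD(4)[OF A w] isderD(4)[OF B w]]])
    using w a1 b1 by (intro lin2) (auto simp: algebra_simps)
qed

lemma isder_smul:
  assumes A: "isder Y A"
  shows "isder Y (\<lambda>u. LSmul c (A u))"
  unfolding isder_def
proof (intro conjI allI impI)
  note a1 = isderD(1)[OF A]
  show "lwf Y (LSmul c (A u))" if "lwf Y u" for u using that a1 by simp
  show "lie_eq Y {} (LSmul c (A u)) (LSmul c (A u'))" if "lie_eq Y {} u u'" for u u'
    using that by (intro lie_eq.cong_smul isderD(2)[OF A])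
  fix a b :: "('a,'b) lterm" assume w: "lwf Y a" "lwf Y b"
  show "lie_eq Y {} (LSmul c (A (LAdd a b))) (LAdd (LSmul c (A a)) (LSmul c (A b)))"
    apply (rule lie_eq.trans[OF lie_eq.cong_smul[OF isderD(3)[OF A w]]])
    using w a1 by (intro lin2) (auto simp: algebra_simps)
  show "lie_eq Y {} (LSmul c (A (LBr a b)))
     (LAdd (LBr (LSmul c (A a)) b) (LBr a (LSmul c (A b))))"
    apply (rule lie_eq.trans[OF lie_eq.cong_smul[OF isderD(5)[OF A w]]])
    using w a1 by (intro lin2) (auto simp: algebra_simps)
next
  note a1 = isderD(1)[OF A]
  fix d and a :: "('a,'b) lterm" assume w: "lwf Y a"
  show "lie_eq Y {} (LSmul c (A (LSmul d a))) (LSmul d (LSmul c (A a)))"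
    apply (rule lie_eq.trans[OF lie_eq.cong_smul[OF isderD(4)[OF A w]]])
    using w a1 by (intro lin2) (auto simp: algebra_simps)
qed

lemma isder_comm:
  assumes A: "isder Y A" and B: "isder Y B"
  shows "isder Y (\<lambda>u. lsub (A (B u)) (B (A u)))"
proof -
  note a1 = isderD(1)[OF A] and b1 = isderD(1)[OF B]
  have "lie_eq Y {} (lsub (A (B (LAdd x y))) (B (A (LAdd x y))))
        (LAdd (lsub (A (B x)) (B (A x))) (lsub (A (B y)) (B (A y))))" if w: "lwf Y x" "lwf Y y" for x y
  proof -
    have "lie_eq Y {} (A (B (LAdd x y))) (LAdd (A (B x)) (A (B y)))"
      using w by (meson A B isderD lie_eq.trans lwf_simps(3))
    moreover have "lie_eq Y {} (B (A (LAdd x y))) (LAdd (B (A x)) (B (A y)))"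
      using w by (meson A B isderD lie_eq.trans lwf_simps(3))
    ultimately have "lie_eq Y {} (lsub (A (B (LAdd x y))) (B (A (LAdd x y))))
        (lsub (LAdd (A (B x)) (A (B y))) (LAdd (B (A x)) (B (A y))))"
      by (intro le_intros)
    also have "lie_eq Y {} \<dots> (LAdd (lsub (A (B x)) (B (A x))) (lsub (A (B y)) (B (A y))))"
      using w a1 b1 by (intro lin2) (auto simp: algebra_simps)
    finally show ?thesis .
  qed
  moreover have "lie_eq Y {} (lsub (A (B (LSmul c x))) (B (A (LSmul c x))))
        (LSmul c (lsub (A (B x)) (B (A x))))" if w: "lwf Y x" for x c
  proof -
    have "lie_eq Y {} (A (B (LSmul c x))) (LSmul c (A (B x)))"
      using w by (meson A B isderD lie_eq.trans)
    moreover have "lie_eq Y {} (B (A (LSmul c x))) (LSmul c (B (A x)))"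
      using w by (meson A B isderD lie_eq.trans)
    ultimately have "lie_eq Y {} (lsub (A (B (LSmul c x))) (B (A (LSmul c x))))
        (lsub (LSmul c (A (B x))) (LSmul c (B (A x))))"
      by (intro le_intros)
    also have "lie_eq Y {} \<dots> (LSmul c (lsub (A (B x)) (B (A x))))"
      using w a1 b1 by (intro lin2) (auto simp: algebra_simps)
    finally show ?thesis .
  qed
  moreover have "lie_eq Y {} (lsub (A (B (LBr x y))) (B (A (LBr x y))))
        (LAdd (LBr (lsub (A (B x)) (B (A x))) y) (LBr x (lsub (A (B y)) (B (A y)))))"
    if w: "lwf Y x" "lwf Y y" for x y
  proof -
    have "lie_eq Y {} (A (B (LBr x y))) (A (LAdd (LBr (B x) y) (LBr x (B y))))"
      using w by (meson A B isderD)
    also have "lie_eq Y {} \<dots> (LAdd (A (LBr (B x) y)) (A (LBr x (B y))))"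
      using w b1 by (intro isderD(3)[OF A]) auto
    also have "lie_eq Y {} \<dots> (LAdd (LAdd (LBr (A (B x)) y) (LBr (B x) (A y)))
                                    (LAdd (LBr (A x) (B y)) (LBr x (A (B y)))))"
      using w b1 by (intro le_intros isderD(5)[OF A]) auto
    finally have 1: "lie_eq Y {} (A (B (LBr x y))) (LAdd (LAdd (LBr (A (B x)) y) (LBr (B x) (A y)))
                                    (LAdd (LBr (A x) (B y)) (LBr x (A (B y)))))" .
    have "lie_eq Y {} (B (A (LBr x y))) (B (LAdd (LBr (A x) y) (LBr x (A y))))"
      using w by (meson A B isderD)
    also have "lie_eq Y {} \<dots> (LAdd (B (LBr (A x) y)) (B (LBr x (A y))))"
      using w a1 by (intro isderD(3)[OF B]) auto
    also have "lie_eq Y {} \<dots> (LAdd (LAdd (LBr (B (A x)) y) (LBr (A x) (B y)))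
                                    (LAdd (LBr (B x) (A y)) (LBr x (B (A y)))))"
      using w a1 by (intro le_intros isderD(5)[OF B]) auto
    finally have 2: "lie_eq Y {} (B (A (LBr x y))) (LAdd (LAdd (LBr (B (A x)) y) (LBr (A x) (B y)))
                                    (LAdd (LBr (B x) (A y)) (LBr x (B (A y)))))" .
    from 1 2 have "lie_eq Y {} (lsub (A (B (LBr x y))) (B (A (LBr x y))))
      (lsub (LAdd (LAdd (LBr (A (B x)) y) (LBr (B x) (A y)))
                                    (LAdd (LBr (A x) (B y)) (LBr x (A (B y)))))
            (LAdd (LAdd (LBr (B (A x)) y) (LBr (A x) (B y)))
                                    (LAdd (LBr (B x) (A y)) (LBr x (B (A y))))))"
      by (intro le_intros)
    also have "lie_eq Y {} \<dots> (LAdd (LBr (lsub (A (B x)) (B (A x))) y) (LBr x (lsub (A (B y)) (B (A y)))))"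
      using w a1 b1 by (intro lin2) (auto simp: algebra_simps)
    finally show ?thesis .
  qed
  moreover have "lie_eq Y {} (lsub (A (B u)) (B (A u))) (lsub (A (B u')) (B (A u')))"
    if "lie_eq Y {} u u'" for u u'
    using that by (meson A B isderD le_intros)
  ultimately show ?thesis unfolding isder_def using a1 b1 by auto
qed

definition opeq :: "'a set \<Rightarrow> (('a,'k::field) lterm \<Rightarrow> ('a,'k) lterm) \<Rightarrow> (('a,'k) lterm \<Rightarrow> ('a,'k) lterm) \<Rightarrow> bool" where
  "opeq Y A B \<longleftrightarrow> (\<forall>u. lwf Y u \<longrightarrow> lie_eq Y {} (A u) (B u))"

lemma der_unique:
  assumes A: "isder Y A" and B: "isder Y B" and g: "\<forall>a\<in>Y. lie_eq Y {} (A (Gen a)) (B (Gen a))"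
  shows "opeq Y A B"
  unfolding opeq_def
proof (intro allI impI)
  note a1 = isderD(1)[OF A] and b1 = isderD(1)[OF B]
  fix u :: "('a,'b) lterm" assume "lwf Y u"
  then show "lie_eq Y {} (A u) (B u)"
  proof (induction u)
    case (Gen x)
    then show ?case using g by simp
  next
    case LZero
    show ?case by (rule lie_eq.trans[OF isder_zero[OF A] lie_eq.sym[OF isder_zero[OF B]]])
  next
    case (LAdd s t)
    then have w: "lwf Y s" "lwf Y t" by auto
    have "lie_eq Y {} (A (LAdd s t)) (LAdd (A s) (A t))" by (rule isderD(3)[OF A w])
    also have "lie_eq Y {} \<dots> (LAdd (B s) (B t))" using LAdd w by (intro lie_eq.cong_add) auto
    also have "lie_eq Y {} \<dots> (B (LAdd s t))" by (rule lie_eq.sym[OF isderD(3)[OF B w]])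
    finally show ?case .
  next
    case (LSmul c t)
    then have w: "lwf Y t" by auto
    have "lie_eq Y {} (A (LSmul c t)) (LSmul c (A t))" by (rule isderD(4)[OF A w])
    also have "lie_eq Y {} \<dots> (LSmul c (B t))" using LSmul w by (intro lie_eq.cong_smul) auto
    also have "lie_eq Y {} \<dots> (B (LSmul c t))" by (rule lie_eq.sym[OF isderD(4)[OF B w]])
    finally show ?case .
  next
    case (LBr s t)
    then have w: "lwf Y s" "lwf Y t" by auto
    have "lie_eq Y {} (A (LBr s t)) (LAdd (LBr (A s) t) (LBr s (A t)))" by (rule isderD(5)[OF A w])
    also have "lie_eq Y {} \<dots> (LAdd (LBr (B s) t) (LBr s (B t)))"
      using LBr w by (intro lie_eq.cong_add lie_eq.cong_br lie_eq.refl) auto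
    also have "lie_eq Y {} \<dots> (B (LBr s t))" by (rule lie_eq.sym[OF isderD(5)[OF B w]])
    finally show ?case .
  qed
qed

primrec act :: "('b \<Rightarrow> ('a,'k::field) lterm \<Rightarrow> ('a,'k) lterm) \<Rightarrow> ('b,'k) lterm \<Rightarrow> ('a,'k) lterm \<Rightarrow> ('a,'k) lterm" where
  "act dv (Gen e) = dv e"
| "act dv LZero = (\<lambda>u. LZero)"
| "act dv (LAdd s t) = (\<lambda>u. LAdd (act dv s u) (act dv t u))"
| "act dv (LSmul c s) = (\<lambda>u. LSmul c (act dv s u))"
| "act dv (LBr s t) = (\<lambda>u. lsub (act dv s (act dv t u)) (act dv t (act dv s u)))"

primrec Pm :: "('b \<Rightarrow> ('a,'k::field) lterm \<Rightarrow> ('a,'k) lterm) \<Rightarrow> ('b \<Rightarrow> ('a,'k) lterm) \<Rightarrow> ('b,'k) lterm \<Rightarrow> ('a,'k) lterm" where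
  "Pm dv pg (Gen e) = pg e"
| "Pm dv pg LZero = LZero"
| "Pm dv pg (LAdd s t) = LAdd (Pm dv pg s) (Pm dv pg t)"
| "Pm dv pg (LSmul c s) = LSmul c (Pm dv pg s)"
| "Pm dv pg (LBr s t) = LAdd (lsub (act dv s (Pm dv pg t)) (act dv t (Pm dv pg s))) (LBr (Pm dv pg s) (Pm dv pg t))"

lemma good:
  assumes H: "\<forall>e\<in>X. isder Y (dv e) \<and> lwf Y (pg e)"
  shows "lwf X t \<Longrightarrow> isder Y (act dv t) \<and> lwf Y (Pm dv pg t)"
proof (induction t)
  case (Gen x)
  then show ?case using H by simp
next
  case LZero
  then show ?case by (simp add: isder_0)
next
  case (LAdd s t)
  then show ?case by (simp add: isder_add)
next
  case (LSmul c t)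
  then show ?case by (simp add: isder_smul)
next
  case (LBr s t)
  then have S: "isder Y (act dv s)" "lwf Y (Pm dv pg s)" and T: "isder Y (act dv t)" "lwf Y (Pm dv pg t)"
    by auto
  then show ?case by (simp add: isder_comm isderD(1)[OF S(1)] isderD(1)[OF T(1)])
qed

lemma opeq_app:
  assumes "isder Y S" "opeq Y S S'" "lie_eq Y {} u u'"
  shows "lie_eq Y {} (S u) (S' u')"
proof -
  have "lie_eq Y {} (S u) (S u')" by (rule isderD(2)[OF assms(1) assms(3)])
  also have "lie_eq Y {} \<dots> (S' u')" using assms(2) lie_eq_lwf2[OF assms(3)] unfolding opeq_def by simp
  finally show ?thesis .
qed

lemma ax_bal_act:
  assumes A: "isder Y A" and B: "isder Y B" and C: "isder Y C" and u: "lwf Y u"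
  shows "lie_eq Y {} (lsub (LAdd (A (C u)) (B (C u))) (C (LAdd (A u) (B u))))
     (LAdd (lsub (A (C u)) (C (A u))) (lsub (B (C u)) (C (B u))))"
proof -
  note w = isderD(1)[OF A] isderD(1)[OF B] isderD(1)[OF C]
  have "lie_eq Y {} (lsub (LAdd (A (C u)) (B (C u))) (C (LAdd (A u) (B u))))
      (lsub (LAdd (A (C u)) (B (C u))) (LAdd (C (A u)) (C (B u))))"
    using u w by (intro le_intros isderD(3)[OF C]) auto
  also have "lie_eq Y {} \<dots> (LAdd (lsub (A (C u)) (C (A u))) (lsub (B (C u)) (C (B u))))"
    using u w by (intro lin2) (auto simp: algebra_simps)
  finally show ?thesis .
qed

lemma ax_bal_P:
  assumes A: "isder Y A" and B: "isder Y B" and C: "isder Y C" and u: "lwf Y a" "lwf Y b" "lwf Y c"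
  shows "lie_eq Y {} (LAdd (lsub (LAdd (A c) (B c)) (C (LAdd a b))) (LBr (LAdd a b) c))
     (LAdd (LAdd (lsub (A c) (C a)) (LBr a c)) (LAdd (lsub (B c) (C b)) (LBr b c)))"
proof -
  note w = isderD(1)[OF A] isderD(1)[OF B] isderD(1)[OF C]
  have "lie_eq Y {} (LAdd (lsub (LAdd (A c) (B c)) (C (LAdd a b))) (LBr (LAdd a b) c))
      (LAdd (lsub (LAdd (A c) (B c)) (LAdd (C a) (C b))) (LBr (LAdd a b) c))"
    using u w by (intro le_intros isderD(3)[OF C]) auto
  also have "lie_eq Y {} \<dots> (LAdd (LAdd (lsub (A c) (C a)) (LBr a c)) (LAdd (lsub (B c) (C b)) (LBr b c)))"
    using u w by (intro lin2) (auto simp: algebra_simps)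
  finally show ?thesis .
qed

lemma ax_bar_act:
  assumes A: "isder Y A" and B: "isder Y B" and C: "isder Y C" and u: "lwf Y u"
  shows "lie_eq Y {} (lsub (A (LAdd (B u) (C u))) (LAdd (B (A u)) (C (A u))))
     (LAdd (lsub (A (B u)) (B (A u))) (lsub (A (C u)) (C (A u))))"
proof -
  note w = isderD(1)[OF A] isderD(1)[OF B] isderD(1)[OF C]
  have "lie_eq Y {} (lsub (A (LAdd (B u) (C u))) (LAdd (B (A u)) (C (A u))))
      (lsub (LAdd (A (B u)) (A (C u))) (LAdd (B (A u)) (C (A u))))"
    using u w by (intro le_intros isderD(3)[OF A]) auto
  also have "lie_eq Y {} \<dots> (LAdd (lsub (A (B u)) (B (A u))) (lsub (A (C u)) (C (A u))))"
    using u w by (intro lin2) (auto simp: algebra_simps)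
  finally show ?thesis .
qed

lemma ax_bar_P:
  assumes A: "isder Y A" and B: "isder Y B" and C: "isder Y C" and u: "lwf Y a" "lwf Y b" "lwf Y c"
  shows "lie_eq Y {} (LAdd (lsub (A (LAdd b c)) (LAdd (B a) (C a))) (LBr a (LAdd b c)))
     (LAdd (LAdd (lsub (A b) (B a)) (LBr a b)) (LAdd (lsub (A c) (C a)) (LBr a c)))"
proof -
  note w = isderD(1)[OF A] isderD(1)[OF B] isderD(1)[OF C]
  have "lie_eq Y {} (LAdd (lsub (A (LAdd b c)) (LAdd (B a) (C a))) (LBr a (LAdd b c)))
      (LAdd (lsub (LAdd (A b) (A c)) (LAdd (B a) (C a))) (LBr a (LAdd b c)))"
    using u w by (intro le_intros isderD(3)[OF A]) auto
  also have "lie_eq Y {} \<dots> (LAdd (LAdd (lsub (A b) (B a)) (LBr a b)) (LAdd (lsub (A c) (C a)) (LBr a c)))"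
    using u w by (intro lin2) (auto simp: algebra_simps)
  finally show ?thesis .
qed

lemma ax_bsl_act:
  assumes A: "isder Y A" and B: "isder Y B" and u: "lwf Y u"
  shows "lie_eq Y {} (lsub (LSmul k (A (B u))) (B (LSmul k (A u))))
     (LSmul k (lsub (A (B u)) (B (A u))))"
proof -
  note w = isderD(1)[OF A] isderD(1)[OF B]
  have "lie_eq Y {} (lsub (LSmul k (A (B u))) (B (LSmul k (A u))))
      (lsub (LSmul k (A (B u))) (LSmul k (B (A u))))"
    using u w by (intro le_intros isderD(4)[OF B]) auto
  also have "lie_eq Y {} \<dots> (LSmul k (lsub (A (B u)) (B (A u))))"
    using u w by (intro lin2) (auto simp: algebra_simps)
  finally show ?thesis .
qed

lemma ax_bsl_P:
  assumes A: "isder Y A" and B: "isder Y B" and u: "lwf Y a" "lwf Y b"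
  shows "lie_eq Y {} (LAdd (lsub (LSmul k (A b)) (B (LSmul k a))) (LBr (LSmul k a) b))
     (LSmul k (LAdd (lsub (A b) (B a)) (LBr a b)))"
proof -
  note w = isderD(1)[OF A] isderD(1)[OF B]
  have "lie_eq Y {} (LAdd (lsub (LSmul k (A b)) (B (LSmul k a))) (LBr (LSmul k a) b))
      (LAdd (lsub (LSmul k (A b)) (LSmul k (B a))) (LBr (LSmul k a) b))"
    using u w by (intro le_intros isderD(4)[OF B]) auto
  also have "lie_eq Y {} \<dots> (LSmul k (LAdd (lsub (A b) (B a)) (LBr a b)))"
    using u w by (intro lin2) (auto simp: algebra_simps)
  finally show ?thesis .
qed

lemma ax_bsr_act:
  assumes A: "isder Y A" and B: "isder Y B" and u: "lwf Y u"
  shows "lie_eq Y {} (lsub (A (LSmul k (B u))) (LSmul k (B (A u))))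
     (LSmul k (lsub (A (B u)) (B (A u))))"
proof -
  note w = isderD(1)[OF A] isderD(1)[OF B]
  have "lie_eq Y {} (lsub (A (LSmul k (B u))) (LSmul k (B (A u))))
      (lsub (LSmul k (A (B u))) (LSmul k (B (A u))))"
    using u w by (intro le_intros isderD(4)[OF A]) auto
  also have "lie_eq Y {} \<dots> (LSmul k (lsub (A (B u)) (B (A u))))"
    using u w by (intro lin2) (auto simp: algebra_simps)
  finally show ?thesis .
qed

lemma ax_bsr_P:
  assumes A: "isder Y A" and B: "isder Y B" and u: "lwf Y a" "lwf Y b"
  shows "lie_eq Y {} (LAdd (lsub (A (LSmul k b)) (LSmul k (B a))) (LBr a (LSmul k b)))
     (LSmul k (LAdd (lsub (A b) (B a)) (LBr a b)))"
proof -
  note w = isderD(1)[OF A] isderD(1)[OF B]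
  have "lie_eq Y {} (LAdd (lsub (A (LSmul k b)) (LSmul k (B a))) (LBr a (LSmul k b)))
      (LAdd (lsub (LSmul k (A b)) (LSmul k (B a))) (LBr a (LSmul k b)))"
    using u w by (intro le_intros isderD(4)[OF A]) auto
  also have "lie_eq Y {} \<dots> (LSmul k (LAdd (lsub (A b) (B a)) (LBr a b)))"
    using u w by (intro lin2) (auto simp: algebra_simps)
  finally show ?thesis .
qed

lemma ax_alt_act:
  assumes A: "isder Y A" and u: "lwf Y u"
  shows "lie_eq Y {} (lsub (A (A u)) (A (A u))) LZero"
  using u isderD(1)[OF A] by (intro lin2) auto

lemma ax_alt_P:
  assumes A: "isder Y A" and u: "lwf Y a"
  shows "lie_eq Y {} (LAdd (lsub (A a) (A a)) (LBr a a)) LZero"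
proof -
  have "lie_eq Y {} (LAdd (lsub (A a) (A a)) (LBr a a)) (LAdd (lsub (A a) (A a)) LZero)"
    using u isderD(1)[OF A] by (intro le_intros lie_eq.br_alt) auto
  also have "lie_eq Y {} \<dots> LZero" using u isderD(1)[OF A] by (intro lin2) auto
  finally show ?thesis .
qed

lemma ax_jac_act:
  assumes A: "isder Y A" and B: "isder Y B" and C: "isder Y C" and u: "lwf Y u"
  shows "lie_eq Y {}
   (LAdd (lsub (A (lsub (B (C u)) (C (B u)))) (lsub (B (C (A u))) (C (B (A u)))))
   (LAdd (lsub (B (lsub (C (A u)) (A (C u)))) (lsub (C (A (B u))) (A (C (B u)))))
         (lsub (C (lsub (A (B u)) (B (A u)))) (lsub (A (B (C u))) (B (A (C u)))))))
   LZero"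
proof -
  note w = isderD(1)[OF A] isderD(1)[OF B] isderD(1)[OF C]
  have "lie_eq Y {}
   (LAdd (lsub (A (lsub (B (C u)) (C (B u)))) (lsub (B (C (A u))) (C (B (A u)))))
   (LAdd (lsub (B (lsub (C (A u)) (A (C u)))) (lsub (C (A (B u))) (A (C (B u)))))
         (lsub (C (lsub (A (B u)) (B (A u)))) (lsub (A (B (C u))) (B (A (C u)))))))
   (LAdd (lsub (lsub (A (B (C u))) (A (C (B u)))) (lsub (B (C (A u))) (C (B (A u)))))
   (LAdd (lsub (lsub (B (C (A u))) (B (A (C u)))) (lsub (C (A (B u))) (A (C (B u)))))
         (lsub (lsub (C (A (B u))) (C (B (A u)))) (lsub (A (B (C u))) (B (A (C u)))))))"
    using u w by (intro le_intros isder_sub[OF A] isder_sub[OF B] isder_sub[OF C]) auto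
  also have "lie_eq Y {} \<dots> LZero"
    using u w by (intro lin2) (auto simp: algebra_simps)
  finally show ?thesis .
qed

lemma ax_jac_P:
  assumes A: "isder Y A" and B: "isder Y B" and C: "isder Y C"
    and u: "lwf Y a" "lwf Y b" "lwf Y c"
  shows "lie_eq Y {}
   (LAdd (LAdd (lsub (A (LAdd (lsub (B c) (C b)) (LBr b c))) (lsub (B (C a)) (C (B a))))
               (LBr a (LAdd (lsub (B c) (C b)) (LBr b c))))
   (LAdd (LAdd (lsub (B (LAdd (lsub (C a) (A c)) (LBr c a))) (lsub (C (A b)) (A (C b))))
               (LBr b (LAdd (lsub (C a) (A c)) (LBr c a))))
         (LAdd (lsub (C (LAdd (lsub (A b) (B a)) (LBr a b))) (lsub (A (B c)) (B (A c))))
               (LBr c (LAdd (lsub (A b) (B a)) (LBr a b))))))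
   LZero"
proof -
  note w = isderD(1)[OF A] isderD(1)[OF B] isderD(1)[OF C]
  have "lie_eq Y {}
   (LAdd (LAdd (lsub (A (LAdd (lsub (B c) (C b)) (LBr b c))) (lsub (B (C a)) (C (B a))))
               (LBr a (LAdd (lsub (B c) (C b)) (LBr b c))))
   (LAdd (LAdd (lsub (B (LAdd (lsub (C a) (A c)) (LBr c a))) (lsub (C (A b)) (A (C b))))
               (LBr b (LAdd (lsub (C a) (A c)) (LBr c a))))
         (LAdd (lsub (C (LAdd (lsub (A b) (B a)) (LBr a b))) (lsub (A (B c)) (B (A c))))
               (LBr c (LAdd (lsub (A b) (B a)) (LBr a b))))))
   (LAdd (LAdd (lsub (LAdd (lsub (A (B c)) (A (C b))) (LAdd (LBr (A b) c) (LBr b (A c)))) (lsub (B (C a)) (C (B a))))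
               (LBr a (LAdd (lsub (B c) (C b)) (LBr b c))))
   (LAdd (LAdd (lsub (LAdd (lsub (B (C a)) (B (A c))) (LAdd (LBr (B c) a) (LBr c (B a)))) (lsub (C (A b)) (A (C b))))
               (LBr b (LAdd (lsub (C a) (A c)) (LBr c a))))
         (LAdd (lsub (LAdd (lsub (C (A b)) (C (B a))) (LAdd (LBr (C a) b) (LBr a (C b)))) (lsub (A (B c)) (B (A c))))
               (LBr c (LAdd (lsub (A b) (B a)) (LBr a b))))))"
    using u w by (intro le_intros isder_P[OF A] isder_P[OF B] isder_P[OF C]) auto
  also have "lie_eq Y {} \<dots> (LAdd (jac a b c) (LAdd (anti (A b) c) (LAdd (anti (B c) a) (anti (C a) b))))"
    using u w by (intro lin2) (auto simp: algebra_simps)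
  also have "lie_eq Y {} \<dots> (LAdd LZero (LAdd LZero (LAdd LZero LZero)))"
    using u w by (intro le_intros lie_eq.jacobi anticomm) auto
  also have "lie_eq Y {} \<dots> LZero" by (intro lin2) auto
  finally show ?thesis .
qed

lemma opeq_refl: "isder Y A \<Longrightarrow> opeq Y A A"
  unfolding opeq_def by (auto intro: lie_eq.refl isderD(1))

lemma opeq_sym: "opeq Y A B \<Longrightarrow> opeq Y B A"
  unfolding opeq_def by (auto intro: lie_eq.sym)

lemma opeq_trans: "opeq Y A B \<Longrightarrow> opeq Y B C \<Longrightarrow> opeq Y A C"
  unfolding opeq_def by (meson lie_eq.trans)

lemma cong_br_act:
  fixes S :: "('a,'k::field) lterm \<Rightarrow> ('a,'k) lterm"
  assumes S: "isder Y S" and T: "isder Y T" and SS: "opeq Y S S'" and TT: "opeq Y T T'"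
  shows "opeq Y (\<lambda>u. lsub (S (T u)) (T (S u))) (\<lambda>u. lsub (S' (T' u)) (T' (S' u)))"
  unfolding opeq_def
proof (intro allI impI)
  fix u :: "('a,'k) lterm" assume u: "lwf Y u"
  have 1: "lie_eq Y {} (T u) (T' u)" "lie_eq Y {} (S u) (S' u)"
    using SS TT u unfolding opeq_def by auto
  show "lie_eq Y {} (lsub (S (T u)) (T (S u))) (lsub (S' (T' u)) (T' (S' u)))"
    by (intro le_intros opeq_app[OF S SS] opeq_app[OF T TT] 1)
qed

theorem semi:
  assumes H: "\<forall>e\<in>X. isder Y (dv e) \<and> lwf Y (pg e)"
    and Rel: "\<And>s t. (s,t) \<in> R \<Longrightarrow> lwf X s \<Longrightarrow> lwf X t \<Longrightarrow>
        opeq Y (act dv s) (act dv t) \<and> lie_eq Y {} (Pm dv pg s) (Pm dv pg t)"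
  shows "lie_eq X R s t \<Longrightarrow> opeq Y (act dv s) (act dv t) \<and> lie_eq Y {} (Pm dv pg s) (Pm dv pg t)"
proof (induction rule: lie_eq.induct)
  case (rel s t)
  then show ?case using Rel by blast
next
  case (refl s)
  then show ?case using good[OF H] by (simp add: opeq_refl lie_eq.refl)
next
  case (sym s t)
  then show ?case by (simp add: opeq_sym lie_eq.sym)
next
  case (trans s t u)
  then show ?case by (meson opeq_trans lie_eq.trans)
next
  case (cong_add s s' t t')
  then show ?case unfolding opeq_def by (simp add: lie_eq.cong_add)
next
  case (cong_smul s s' c)
  then show ?case unfolding opeq_def by (simp add: lie_eq.cong_smul)
next
  case (cong_br s s' t t')
  have w: "lwf X s" "lwf X s'" "lwf X t" "lwf X t'" using cong_br.hyps lie_eq_lwf by blast+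
  have S: "isder Y (act dv s)" "lwf Y (Pm dv pg s)" using good[OF H w(1)] by auto
  have S': "isder Y (act dv s')" "lwf Y (Pm dv pg s')" using good[OF H w(2)] by auto
  have T: "isder Y (act dv t)" "lwf Y (Pm dv pg t)" using good[OF H w(3)] by auto
  have T': "isder Y (act dv t')" "lwf Y (Pm dv pg t')" using good[OF H w(4)] by auto
  have "opeq Y (act dv (LBr s t)) (act dv (LBr s' t'))"
    using cong_br.IH by (simp add: cong_br_act S(1) T(1))
  moreover have "lie_eq Y {} (Pm dv pg (LBr s t)) (Pm dv pg (LBr s' t'))"
    using cong_br.IH by (simp, intro le_intros opeq_app[OF S(1)] opeq_app[OF T(1)]) auto
  ultimately show ?case by blast
next
  case (add_assoc x y z)
  have X: "isder Y (act dv x)" "lwf Y (Pm dv pg x)" using good[OF H] add_assoc by auto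
  have Y: "isder Y (act dv y)" "lwf Y (Pm dv pg y)" using good[OF H] add_assoc by auto
  have Z: "isder Y (act dv z)" "lwf Y (Pm dv pg z)" using good[OF H] add_assoc by auto
  show ?case unfolding opeq_def
    using X Y Z isderD(1)[OF X(1)] isderD(1)[OF Y(1)] isderD(1)[OF Z(1)] by (simp add: lie_eq.add_assoc)
next
  case (add_comm x y)
  have X: "isder Y (act dv x)" "lwf Y (Pm dv pg x)" using good[OF H] add_comm by auto
  have Y: "isder Y (act dv y)" "lwf Y (Pm dv pg y)" using good[OF H] add_comm by auto
  show ?case unfolding opeq_def
    using X Y isderD(1)[OF X(1)] isderD(1)[OF Y(1)] by (simp add: lie_eq.add_comm)
next
  case (add_zero x)
  have X: "isder Y (act dv x)" "lwf Y (Pm dv pg x)" using good[OF H] add_zero by auto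
  show ?case unfolding opeq_def
    using X isderD(1)[OF X(1)] by (simp add: lie_eq.add_zero)
next
  case (add_inv x)
  have X: "isder Y (act dv x)" "lwf Y (Pm dv pg x)" using good[OF H] add_inv by auto
  show ?case unfolding opeq_def
    using X isderD(1)[OF X(1)] by (simp add: lie_eq.add_inv)
next
  case (smul_one x)
  have X: "isder Y (act dv x)" "lwf Y (Pm dv pg x)" using good[OF H] smul_one by auto
  show ?case unfolding opeq_def
    using X isderD(1)[OF X(1)] by (simp add: lie_eq.smul_one)
next
  case (smul_assoc x a b)
  have X: "isder Y (act dv x)" "lwf Y (Pm dv pg x)" using good[OF H] smul_assoc by auto
  show ?case unfolding opeq_def
    using X isderD(1)[OF X(1)] by (simp add: lie_eq.smul_assoc)
next
  case (smul_add x y a)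
  have X: "isder Y (act dv x)" "lwf Y (Pm dv pg x)" using good[OF H] smul_add by auto
  have Y: "isder Y (act dv y)" "lwf Y (Pm dv pg y)" using good[OF H] smul_add by auto
  show ?case unfolding opeq_def
    using X Y isderD(1)[OF X(1)] isderD(1)[OF Y(1)] by (simp add: lie_eq.smul_add)
next
  case (add_smul x a b)
  have X: "isder Y (act dv x)" "lwf Y (Pm dv pg x)" using good[OF H] add_smul by auto
  show ?case unfolding opeq_def
    using X isderD(1)[OF X(1)] by (simp add: lie_eq.add_smul)
next
  case (br_add_left x y z)
  have X: "isder Y (act dv x)" "lwf Y (Pm dv pg x)" using good[OF H] br_add_left by auto
  have Y: "isder Y (act dv y)" "lwf Y (Pm dv pg y)" using good[OF H] br_add_left by auto
  have Z: "isder Y (act dv z)" "lwf Y (Pm dv pg z)" using good[OF H] br_add_left by auto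
  show ?case unfolding opeq_def
    using ax_bal_act[OF X(1) Y(1) Z(1)] ax_bal_P[OF X(1) Y(1) Z(1) X(2) Y(2) Z(2)] by simp
next
  case (br_add_right x y z)
  have X: "isder Y (act dv x)" "lwf Y (Pm dv pg x)" using good[OF H] br_add_right by auto
  have Y: "isder Y (act dv y)" "lwf Y (Pm dv pg y)" using good[OF H] br_add_right by auto
  have Z: "isder Y (act dv z)" "lwf Y (Pm dv pg z)" using good[OF H] br_add_right by auto
  show ?case unfolding opeq_def
    using ax_bar_act[OF X(1) Y(1) Z(1)] ax_bar_P[OF X(1) Y(1) Z(1) X(2) Y(2) Z(2)] by simp
next
  case (br_smul_left x y a)
  have X: "isder Y (act dv x)" "lwf Y (Pm dv pg x)" using good[OF H] br_smul_left by auto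
  have Y: "isder Y (act dv y)" "lwf Y (Pm dv pg y)" using good[OF H] br_smul_left by auto
  show ?case unfolding opeq_def
    using ax_bsl_act[OF X(1) Y(1)] ax_bsl_P[OF X(1) Y(1) X(2) Y(2)] by simp
next
  case (br_smul_right x y a)
  have X: "isder Y (act dv x)" "lwf Y (Pm dv pg x)" using good[OF H] br_smul_right by auto
  have Y: "isder Y (act dv y)" "lwf Y (Pm dv pg y)" using good[OF H] br_smul_right by auto
  show ?case unfolding opeq_def
    using ax_bsr_act[OF X(1) Y(1)] ax_bsr_P[OF X(1) Y(1) X(2) Y(2)] by simp
next
  case (br_alt x)
  have X: "isder Y (act dv x)" "lwf Y (Pm dv pg x)" using good[OF H] br_alt by auto
  show ?case unfolding opeq_def
    using ax_alt_act[OF X(1)] ax_alt_P[OF X(1) X(2)] by simp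
next
  case (jacobi x y z)
  have X: "isder Y (act dv x)" "lwf Y (Pm dv pg x)" using good[OF H] jacobi by auto
  have Y: "isder Y (act dv y)" "lwf Y (Pm dv pg y)" using good[OF H] jacobi by auto
  have Z: "isder Y (act dv z)" "lwf Y (Pm dv pg z)" using good[OF H] jacobi by auto
  show ?case unfolding opeq_def
    using ax_jac_act[OF X(1) Y(1) Z(1)] ax_jac_P[OF X(1) Y(1) Z(1) X(2) Y(2) Z(2)] by simp
qed

lemma lwf_mono: "lwf X t \<Longrightarrow> X \<subseteq> X' \<Longrightarrow> lwf X' t"
  unfolding lwf_def by blast

lemma lie_eq_mono: "lie_eq X R s t \<Longrightarrow> X \<subseteq> X' \<Longrightarrow> R \<subseteq> R' \<Longrightarrow> lie_eq X' R' s t"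
proof (induction rule: lie_eq.induct)
  case (rel s t) then show ?case by (intro lie_eq.rel) (auto intro: lwf_mono)
next case (refl s) then show ?case by (intro lie_eq.refl) (auto intro: lwf_mono)
next case (sym s t) then show ?case by (simp add: lie_eq.sym)
next case (trans s t u) then show ?case by (meson lie_eq.trans)
next case (cong_add s s' t t') then show ?case by (simp add: lie_eq.cong_add)
next case (cong_smul s s' c) then show ?case by (simp add: lie_eq.cong_smul)
next case (cong_br s s' t t') then show ?case by (simp add: lie_eq.cong_br)
next case (add_assoc x y z) show ?case by (rule lie_eq.add_assoc) (use add_assoc in \<open>auto intro: lwf_mono\<close>)
next case (add_comm x y) show ?case by (rule lie_eq.add_comm) (use add_comm in \<open>auto intro: lwf_mono\<close>)
next case (add_zero x) show ?case by (rule lie_eq.add_zero) (use add_zero in \<open>auto intro: lwf_mono\<close>)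
next case (add_inv x) show ?case by (rule lie_eq.add_inv) (use add_inv in \<open>auto intro: lwf_mono\<close>)
next case (smul_one x) show ?case by (rule lie_eq.smul_one) (use smul_one in \<open>auto intro: lwf_mono\<close>)
next case (smul_assoc x a b) show ?case by (rule lie_eq.smul_assoc) (use smul_assoc in \<open>auto intro: lwf_mono\<close>)
next case (smul_add x y a) show ?case by (rule lie_eq.smul_add) (use smul_add in \<open>auto intro: lwf_mono\<close>)
next case (add_smul x a b) show ?case by (rule lie_eq.add_smul) (use add_smul in \<open>auto intro: lwf_mono\<close>)
next case (br_add_left x y z) show ?case by (rule lie_eq.br_add_left) (use br_add_left in \<open>auto intro: lwf_mono\<close>)
next case (br_add_right x y z) show ?case by (rule lie_eq.br_add_right) (use br_add_right in \<open>auto intro: lwf_mono\<close>)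
next case (br_smul_left x y a) show ?case by (rule lie_eq.br_smul_left) (use br_smul_left in \<open>auto intro: lwf_mono\<close>)
next case (br_smul_right x y a) show ?case by (rule lie_eq.br_smul_right) (use br_smul_right in \<open>auto intro: lwf_mono\<close>)
next case (br_alt x) show ?case by (rule lie_eq.br_alt) (use br_alt in \<open>auto intro: lwf_mono\<close>)
next case (jacobi x y z) show ?case by (rule lie_eq.jacobi) (use jacobi in \<open>auto intro: lwf_mono\<close>)
qed


lemma lin_mod:
  assumes "lwf X a" "lwf X b" "lwf X z" "lie_eq X R z LZero"
    "\<And>x. nf a (BL x) = nf (LAdd b z) (BL x)" "\<And>p q. nf a (BN p q) = nf (LAdd b z) (BN p q)"
  shows "lie_eq X R a b"
proof -
  have "lie_eq X R a (LAdd b z)" using assms by (intro lin2) auto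
  also have "lie_eq X R \<dots> (LAdd b LZero)" using assms by (intro le_intros) auto
  also have "lie_eq X R \<dots> b" using assms by (intro lie_eq.add_zero)
  finally show ?thesis .
qed

lemma anti_swap:
  assumes "lwf X a" "lwf X b"
  shows "lie_eq X R (LBr a b) (LSmul (-1) (LBr b a))"
  by (rule lin_mod[where z = "anti a b"]) (use assms in \<open>auto intro: anticomm\<close>)

lemma kill_lwf: "lwf X t \<Longrightarrow> lwf (X - V) (kill V t)"
  by (induction t) auto

lemma kill_zero: "lwf V s \<Longrightarrow> lie_eq X R (kill V s) LZero"
proof (induction s)
  case (Gen x) then show ?case by (simp add: lie_eq.refl)
next
  case LZero then show ?case by (simp add: lie_eq.refl)
next
  case (LAdd s t)
  then have "lie_eq X R (kill V (LAdd s t)) (LAdd LZero LZero)" by (simp add: lie_eq.cong_add)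
  also have "lie_eq X R \<dots> LZero" by (intro lin2) auto
  finally show ?case .
next
  case (LSmul c t)
  then have "lie_eq X R (kill V (LSmul c t)) (LSmul c LZero)" by (simp add: lie_eq.cong_smul)
  also have "lie_eq X R \<dots> LZero" by (intro lin2) auto
  finally show ?case .
next
  case (LBr s t)
  then have "lie_eq X R (kill V (LBr s t)) (LBr LZero LZero)" by (simp add: lie_eq.cong_br)
  also have "lie_eq X R \<dots> LZero" by (intro lin2) auto
  finally show ?case .
qed

lemma triangle_intro:
  "{p,q} \<in> E \<Longrightarrow> {q,r} \<in> E \<Longrightarrow> {p,r} \<in> E \<Longrightarrow> p \<noteq> q \<Longrightarrow> q \<noteq> r \<Longrightarrow> p \<noteq> r \<Longrightarrow>
   triangle E {{p,q},{q,r},{p,r}}"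
  unfolding triangle_def apply (rule conjI) apply simp
  apply (rule exI[of _ p], rule exI[of _ q], rule exI[of _ r]) by simp

locale hg =
  fixes Vs :: "'v set" and E :: "'v set set" and v :: 'v
  assumes graph: "simple_graph Vs E"
    and K: "\<forall>a b. {a, v} \<in> E \<longrightarrow> {b, v} \<in> E \<longrightarrow> a \<noteq> b \<longrightarrow> {a, b} \<in> E"
begin

definition VV where "VV = {e \<in> E. v \<in> e}"
definition E2 where "E2 = E - {e \<in> E. v \<in> e}"

lemma edge: "e \<in> E \<Longrightarrow> \<exists>a b. a \<noteq> b \<and> e = {a,b}"
  using graph unfolding simple_graph_def by blast

lemma edge_at: "e \<in> E \<Longrightarrow> x \<in> e \<Longrightarrow> \<exists>y. y \<noteq> x \<and> e = {x,y}"
  using edge by fastforce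

lemma K': "{v,a} \<in> E \<Longrightarrow> {v,b} \<in> E \<Longrightarrow> a \<noteq> b \<Longrightarrow> {a,b} \<in> E"
  using K by (metis insert_commute)

lemma VV_form: "w \<in> VV \<Longrightarrow> \<exists>s. s \<noteq> v \<and> w = {v,s} \<and> {v,s} \<in> E"
  unfolding VV_def using edge_at by blast

lemma E2_sub: "E2 \<subseteq> E" and VV_sub: "VV \<subseteq> E" unfolding E2_def VV_def by auto

lemma tri_parts: "triangle E T \<Longrightarrow> \<exists>p q r. p \<noteq> q \<and> q \<noteq> r \<and> p \<noteq> r \<and> T = {{p,q},{q,r},{p,r}}
    \<and> {p,q} \<in> E \<and> {q,r} \<in> E \<and> {p,r} \<in> E"
proof -
  assume "triangle E T"
  then have h0: "T \<subseteq> E" and "\<exists>x y z. x \<noteq> y \<and> y \<noteq> z \<and> x \<noteq> z \<and> T = {{x, y}, {y, z}, {x, z}}"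
    unfolding triangle_def by simp_all
  then obtain p q r where h: "p \<noteq> q" "q \<noteq> r" "p \<noteq> r" "T = {{p,q},{q,r},{p,r}}"
    by (elim exE conjE) (rule that)
  have "{p,q} \<in> E" "{q,r} \<in> E" "{p,r} \<in> E" using h(4) h0 by auto
  then show ?thesis using h by blast
qed

lemma holo_rels_mono: "holo_rels E2 \<subseteq> (holo_rels E :: (('v set,'k::field) lterm \<times> _) set)"
proof
  fix st :: "('v set,'k) lterm \<times> ('v set,'k) lterm"
  assume st: "st \<in> holo_rels E2"
  have tri: "triangle E2 T" if hT: "triangle E T" "x \<in> T" "y \<in> T" "x \<noteq> y" "x \<in> E2" "y \<in> E2" for T x y
  proof -
    obtain p q r where pqr: "p \<noteq> q" "q \<noteq> r" "p \<noteq> r" "T = {{p,q},{q,r},{p,r}}"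
      "{p,q} \<in> E" "{q,r} \<in> E" "{p,r} \<in> E" using tri_parts[OF hT(1)] by blast
    have xy: "v \<notin> x" "v \<notin> y" using hT(5,6) unfolding E2_def by auto
    have xT: "x = {p,q} \<or> x = {q,r} \<or> x = {p,r}" and yT: "y = {p,q} \<or> y = {q,r} \<or> y = {p,r}"
      using hT(2,3) pqr(4) by auto
    have "v \<noteq> p" using xT yT xy hT(4) by auto
    moreover have "v \<noteq> q" using xT yT xy hT(4) by auto
    moreover have "v \<noteq> r" using xT yT xy hT(4) by auto
    ultimately have "v \<notin> {p,q,r}" by simp
    then have "T \<subseteq> E2" using pqr unfolding E2_def by auto
    then show ?thesis using hT(1) unfolding triangle_def by blast
  qed
  have tri2: "triangle E T" if "triangle E2 T" for T
    using that E2_sub unfolding triangle_def by blast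
  have "st \<in> {(LBr (Gen x) (Gen y), LZero) | x y. x \<in> E2 \<and> y \<in> E2 \<and> x \<noteq> y \<and>
         \<not> (\<exists>T. triangle E2 T \<and> x \<in> T \<and> y \<in> T)} \<or>
     st \<in> {(LBr (Gen a) (Gen b), LBr (Gen b) (Gen c)) | a b c.
         a \<noteq> b \<and> b \<noteq> c \<and> a \<noteq> c \<and> triangle E2 {a, b, c}} \<or>
     st \<in> {(LBr (Gen b) (Gen c), LBr (Gen c) (Gen a)) | a b c.
         a \<noteq> b \<and> b \<noteq> c \<and> a \<noteq> c \<and> triangle E2 {a, b, c}}"
    using st unfolding holo_rels_def Un_iff by blast
  then show "st \<in> holo_rels E"
  proof (elim disjE)
    assume "st \<in> {(LBr (Gen x) (Gen y), LZero) | x y. x \<in> E2 \<and> y \<in> E2 \<and> x \<noteq> y \<and>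
         \<not> (\<exists>T. triangle E2 T \<and> x \<in> T \<and> y \<in> T)}"
    then obtain x y where A: "st = (LBr (Gen x) (Gen y), LZero)" "x \<in> E2" "y \<in> E2" "x \<noteq> y"
        "\<not> (\<exists>T. triangle E2 T \<and> x \<in> T \<and> y \<in> T)"
      by (elim CollectE exE conjE) (rule that; assumption)
    have "\<not> (\<exists>T. triangle E T \<and> x \<in> T \<and> y \<in> T)" using A tri by blast
    moreover have "x \<in> E" "y \<in> E" using A E2_sub by auto
    ultimately show ?thesis unfolding A(1) holo_rels_def Un_iff
      apply (intro disjI1 CollectI)
      apply (rule exI[of _ x], rule exI[of _ y]) using A by simp
  next
    assume "st \<in> {(LBr (Gen a) (Gen b), LBr (Gen b) (Gen c)) | a b c.
         a \<noteq> b \<and> b \<noteq> c \<and> a \<noteq> c \<and> triangle E2 {a, b, c}}"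
    then obtain a b c where B: "st = (LBr (Gen a) (Gen b), LBr (Gen b) (Gen c))" "a \<noteq> b" "b \<noteq> c" "a \<noteq> c"
        "triangle E2 {a, b, c}"
      by (elim CollectE exE conjE) (rule that; assumption)
    have tE: "triangle E {a,b,c}" using tri2 B by blast
    show ?thesis unfolding B(1) holo_rels_def Un_iff
      apply (rule disjI1, rule disjI2, rule CollectI)
      apply (rule exI[of _ a], rule exI[of _ b], rule exI[of _ c]) using B tE by simp
  next
    assume "st \<in> {(LBr (Gen b) (Gen c), LBr (Gen c) (Gen a)) | a b c.
         a \<noteq> b \<and> b \<noteq> c \<and> a \<noteq> c \<and> triangle E2 {a, b, c}}"
    then obtain a b c where C: "st = (LBr (Gen b) (Gen c), LBr (Gen c) (Gen a))" "a \<noteq> b" "b \<noteq> c" "a \<noteq> c"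
        "triangle E2 {a, b, c}"
      by (elim CollectE exE conjE) (rule that; assumption)
    have tE: "triangle E {a,b,c}" using tri2 C by blast
    show ?thesis unfolding C(1) holo_rels_def Un_iff
      apply (intro disjI2 CollectI)
      apply (rule exI[of _ a], rule exI[of _ b], rule exI[of _ c]) using C tE by simp
  qed
qed

end

lemma rel1: "x \<in> E \<Longrightarrow> y \<in> E \<Longrightarrow> x \<noteq> y \<Longrightarrow> \<not> (\<exists>T. triangle E T \<and> x \<in> T \<and> y \<in> T) \<Longrightarrow>
   (LBr (Gen x) (Gen y), LZero) \<in> holo_rels E"
  unfolding holo_rels_def Un_iff
  apply (intro disjI1 CollectI)
  apply (rule exI[of _ x], rule exI[of _ y]) by simp

lemma rel2: "a \<noteq> b \<Longrightarrow> b \<noteq> c \<Longrightarrow> a \<noteq> c \<Longrightarrow> triangle E {a,b,c} \<Longrightarrow>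
   (LBr (Gen a) (Gen b), LBr (Gen b) (Gen c)) \<in> holo_rels E"
  unfolding holo_rels_def Un_iff
  apply (rule disjI1, rule disjI2, rule CollectI)
  apply (rule exI[of _ a], rule exI[of _ b], rule exI[of _ c]) by simp

lemma rel3: "a \<noteq> b \<Longrightarrow> b \<noteq> c \<Longrightarrow> a \<noteq> c \<Longrightarrow> triangle E {a,b,c} \<Longrightarrow>
   (LBr (Gen b) (Gen c), LBr (Gen c) (Gen a)) \<in> holo_rels E"
  unfolding holo_rels_def Un_iff
  apply (rule disjI2, rule CollectI)
  apply (rule exI[of _ a], rule exI[of _ b], rule exI[of _ c]) by simp

context hg
begin

lemma tri3:
  assumes T: "triangle E T" and x: "x \<in> T" and y: "y \<in> T" and vx: "v \<in> x" and vy: "v \<notin> y"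
  shows "insert v (y - x) \<in> VV \<and> triangle E {insert v (y - x), y, x} \<and> insert v (y - x) \<noteq> x
     \<and> insert v (y - x) \<noteq> y \<and> x \<noteq> y"
proof -
  obtain p q r where pqr: "p \<noteq> q" "q \<noteq> r" "p \<noteq> r" "T = {{p,q},{q,r},{p,r}}"
    "{p,q} \<in> E" "{q,r} \<in> E" "{p,r} \<in> E" using tri_parts[OF T] by blast
  have xT: "x = {p,q} \<or> x = {q,r} \<or> x = {p,r}" and yT: "y = {p,q} \<or> y = {q,r} \<or> y = {p,r}"
    using x y pqr(4) by auto
  have Teq: "T = {{p,q},{q,r},{p,r}}" by (rule pqr(4))
  show ?thesis
    using xT yT vx vy pqr T unfolding VV_def
    by (elim disjE) (auto simp: insert_Diff_if insert_commute)
qed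

lemma R_gen:
  assumes x: "x \<in> VV" and y: "y \<in> E2"
  shows "\<exists>s. lwf VV s \<and> holo_eq E (LBr (Gen y) (Gen x) :: ('v set,'k::field) lterm) s"
proof (cases "\<exists>T. triangle E T \<and> y \<in> T \<and> x \<in> T")
  case True
  then obtain T where T: "triangle E T" "y \<in> T" "x \<in> T" by blast
  have vx: "v \<in> x" using x unfolding VV_def by simp
  have vy: "v \<notin> y" using y unfolding E2_def by simp
  let ?z = "insert v (y - x)"
  have h: "?z \<in> VV" "triangle E {?z, y, x}" "?z \<noteq> x" "?z \<noteq> y" "x \<noteq> y"
    using tri3[OF T(1) T(3) T(2) vx vy] by auto
  have "holo_eq E (LBr (Gen y) (Gen x) :: ('v set,'k) lterm) (LBr (Gen x) (Gen ?z))"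
    apply (rule lie_eq.rel)
    using rel3[of ?z y x E] h x y VV_sub E2_sub by auto
  then show ?thesis using h x by (intro exI[of _ "LBr (Gen x) (Gen ?z)"]) simp
next
  case False
  have "x \<noteq> y" using x y unfolding VV_def E2_def by auto
  then have "holo_eq E (LBr (Gen y) (Gen x) :: ('v set,'k) lterm) LZero"
    apply (intro lie_eq.rel rel1)
    using False x y VV_sub E2_sub by auto
  then show ?thesis by (intro exI[of _ LZero]) simp
qed

lemma M_gen:
  assumes y: "y \<in> E2"
  shows "lwf VV s \<Longrightarrow> \<exists>s'. lwf VV s' \<and> holo_eq E (LBr (Gen y) s :: ('v set,'k::field) lterm) s'"
proof (induction s)
  case (Gen x)
  then show ?case using R_gen y by simp
next
  case LZero
  have "holo_eq E (LBr (Gen y) LZero :: ('v set,'k) lterm) LZero"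
    using y E2_sub by (intro br_zero_right) auto
  then show ?case by (intro exI[of _ LZero]) simp
next
  case (LAdd s1 s2)
  then obtain m1 m2 where m: "lwf VV m1" "holo_eq E (LBr (Gen y) s1 :: ('v set,'k) lterm) m1"
    "lwf VV m2" "holo_eq E (LBr (Gen y) s2 :: ('v set,'k) lterm) m2" by auto
  have "holo_eq E (LBr (Gen y) (LAdd s1 s2)) (LAdd (LBr (Gen y) s1) (LBr (Gen y) s2))"
    using y LAdd.prems E2_sub VV_sub by (intro lie_eq.br_add_right) (auto intro: lwf_mono)
  also have "holo_eq E \<dots> (LAdd m1 m2)" using m by (intro lie_eq.cong_add)
  finally show ?case using m by (intro exI[of _ "LAdd m1 m2"]) simp
next
  case (LSmul c s1)
  then obtain m1 where m: "lwf VV m1" "holo_eq E (LBr (Gen y) s1 :: ('v set,'k) lterm) m1" by auto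
  have "holo_eq E (LBr (Gen y) (LSmul c s1)) (LSmul c (LBr (Gen y) s1))"
    using y LSmul.prems E2_sub VV_sub by (intro lie_eq.br_smul_right) (auto intro: lwf_mono)
  also have "holo_eq E \<dots> (LSmul c m1)" using m by (intro lie_eq.cong_smul)
  finally show ?case using m by (intro exI[of _ "LSmul c m1"]) simp
next
  case (LBr s1 s2)
  then obtain m1 m2 where m: "lwf VV m1" "holo_eq E (LBr (Gen y) s1 :: ('v set,'k) lterm) m1"
    "lwf VV m2" "holo_eq E (LBr (Gen y) s2 :: ('v set,'k) lterm) m2" by auto
  have w: "lwf E s1" "lwf E s2" "lwf E (Gen y)" using LBr.prems y E2_sub VV_sub by (auto intro: lwf_mono)
  have "holo_eq E (LBr (Gen y) (LBr s1 s2)) (LAdd (LBr (LBr (Gen y) s1) s2) (LBr s1 (LBr (Gen y) s2)))"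
    using w by (intro jacobi')
  also have "holo_eq E \<dots> (LAdd (LBr m1 s2) (LBr s1 m2))"
    using m w by (intro le_intros) auto
  finally show ?case using m LBr.prems by (intro exI[of _ "LAdd (LBr m1 s2) (LBr s1 m2)"]) simp
qed

lemma M_lem:
  "lwf E2 k \<Longrightarrow> lwf VV s \<Longrightarrow> \<exists>s'. lwf VV s' \<and> holo_eq E (LBr k s :: ('v set,'k::field) lterm) s'"
proof (induction k arbitrary: s)
  case (Gen y)
  then show ?case using M_gen by simp
next
  case LZero
  have "holo_eq E (LBr LZero s :: ('v set,'k) lterm) LZero"
    using LZero.prems VV_sub by (intro br_zero_left) (auto intro: lwf_mono)
  then show ?case by (intro exI[of _ LZero]) simp
next
  case (LAdd k1 k2)
  then obtain m1 m2 where m: "lwf VV m1" "holo_eq E (LBr k1 s :: ('v set,'k) lterm) m1"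
    "lwf VV m2" "holo_eq E (LBr k2 s :: ('v set,'k) lterm) m2" by (meson lwf_simps(3))
  have "holo_eq E (LBr (LAdd k1 k2) s) (LAdd (LBr k1 s) (LBr k2 s))"
    using LAdd.prems E2_sub VV_sub by (intro lie_eq.br_add_left) (auto intro: lwf_mono)
  also have "holo_eq E \<dots> (LAdd m1 m2)" using m by (intro lie_eq.cong_add)
  finally show ?case using m by (intro exI[of _ "LAdd m1 m2"]) simp
next
  case (LSmul c k1)
  then obtain m1 where m: "lwf VV m1" "holo_eq E (LBr k1 s :: ('v set,'k) lterm) m1" by (meson lwf_simps(4))
  have "holo_eq E (LBr (LSmul c k1) s) (LSmul c (LBr k1 s))"
    using LSmul.prems E2_sub VV_sub by (intro lie_eq.br_smul_left) (auto intro: lwf_mono)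
  also have "holo_eq E \<dots> (LSmul c m1)" using m by (intro lie_eq.cong_smul)
  finally show ?case using m by (intro exI[of _ "LSmul c m1"]) simp
next
  case (LBr k1 k2)
  have wk: "lwf E2 k1" "lwf E2 k2" using LBr.prems by auto
  have w: "lwf E k1" "lwf E k2" "lwf E s" using LBr.prems E2_sub VV_sub by (auto intro: lwf_mono)
  obtain m2 where m2: "lwf VV m2" "holo_eq E (LBr k2 s :: ('v set,'k) lterm) m2"
    using LBr.IH(2)[OF wk(2) LBr.prems(2)] by blast
  obtain m3 where m3: "lwf VV m3" "holo_eq E (LBr k1 m2 :: ('v set,'k) lterm) m3"
    using LBr.IH(1)[OF wk(1) m2(1)] by blast
  obtain m1 where m1: "lwf VV m1" "holo_eq E (LBr k1 s :: ('v set,'k) lterm) m1"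
    using LBr.IH(1)[OF wk(1) LBr.prems(2)] by blast
  obtain m4 where m4: "lwf VV m4" "holo_eq E (LBr k2 m1 :: ('v set,'k) lterm) m4"
    using LBr.IH(2)[OF wk(2) m1(1)] by blast
  have "holo_eq E (LBr (LBr k1 k2) s)
     (lsub (LAdd (LBr (LBr k1 k2) s) (LBr k2 (LBr k1 s))) (LBr k2 (LBr k1 s)))"
    using w by (intro lin2) (auto simp: algebra_simps)
  also have "holo_eq E \<dots> (lsub (LBr k1 (LBr k2 s)) (LBr k2 (LBr k1 s)))"
    using w by (intro le_intros lie_eq.sym[OF jacobi']) auto
  also have "holo_eq E \<dots> (lsub (LBr k1 m2) (LBr k2 m1))"
    using w m1 m2 by (intro le_intros) auto
  also have "holo_eq E \<dots> (lsub m3 m4)"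
    using m3 m4 by (intro le_intros)
  finally show ?case using m3 m4 by (intro exI[of _ "lsub m3 m4"]) simp
qed

lemma decomp:
  "lwf E t \<Longrightarrow> \<exists>s. lwf VV s \<and> holo_eq E t (LAdd (kill VV t) s :: ('v set,'k::field) lterm)"
proof (induction t)
  case (Gen e)
  show ?case
  proof (cases "e \<in> VV")
    case True
    have "holo_eq E (Gen e :: ('v set,'k) lterm) (LAdd LZero (Gen e))"
      using Gen by (intro lin2) auto
    then show ?thesis using True by (intro exI[of _ "Gen e"]) simp
  next
    case False
    have "holo_eq E (Gen e :: ('v set,'k) lterm) (LAdd (Gen e) LZero)"
      using Gen by (intro lin2) auto
    then show ?thesis using False by (intro exI[of _ LZero]) simp
  qed
next
  case LZero
  have "holo_eq E (LZero :: ('v set,'k) lterm) (LAdd LZero LZero)" by (intro lin2) auto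
  then show ?case by (intro exI[of _ LZero]) simp
next
  case (LAdd t1 t2)
  then obtain s1 s2 where s: "lwf VV s1" "holo_eq E t1 (LAdd (kill VV t1) s1 :: ('v set,'k) lterm)"
    "lwf VV s2" "holo_eq E t2 (LAdd (kill VV t2) s2 :: ('v set,'k) lterm)" by auto
  have wk: "lwf E (kill VV t1)" "lwf E (kill VV t2)"
    using kill_lwf[of E t1 VV] kill_lwf[of E t2 VV] LAdd.prems lwf_mono by auto
  have "holo_eq E (LAdd t1 t2) (LAdd (LAdd (kill VV t1) s1) (LAdd (kill VV t2) s2))"
    using s by (intro lie_eq.cong_add)
  also have "holo_eq E \<dots> (LAdd (kill VV (LAdd t1 t2)) (LAdd s1 s2))"
    using s wk VV_sub by (intro lin2) (auto simp: algebra_simps intro: lwf_mono)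
  finally show ?case using s by (intro exI[of _ "LAdd s1 s2"]) simp
next
  case (LSmul c t1)
  then obtain s1 where s: "lwf VV s1" "holo_eq E t1 (LAdd (kill VV t1) s1 :: ('v set,'k) lterm)" by auto
  have wk: "lwf E (kill VV t1)"
    using kill_lwf[of E t1 VV] LSmul.prems lwf_mono by auto
  have "holo_eq E (LSmul c t1) (LSmul c (LAdd (kill VV t1) s1))"
    using s by (intro lie_eq.cong_smul)
  also have "holo_eq E \<dots> (LAdd (kill VV (LSmul c t1)) (LSmul c s1))"
    using s wk VV_sub by (intro lin2) (auto simp: algebra_simps intro: lwf_mono)
  finally show ?case using s by (intro exI[of _ "LSmul c s1"]) simp
next
  case (LBr t1 t2)
  then obtain s1 s2 where s: "lwf VV s1" "holo_eq E t1 (LAdd (kill VV t1) s1 :: ('v set,'k) lterm)"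
    "lwf VV s2" "holo_eq E t2 (LAdd (kill VV t2) s2 :: ('v set,'k) lterm)" by auto
  have wk2: "lwf E2 (kill VV t1)" "lwf E2 (kill VV t2)"
    using kill_lwf[of E t1 VV] kill_lwf[of E t2 VV] LBr.prems unfolding E2_def VV_def by auto
  have wk: "lwf E (kill VV t1)" "lwf E (kill VV t2)" using wk2 E2_sub lwf_mono by auto
  have ws: "lwf E s1" "lwf E s2" using s VV_sub lwf_mono by auto
  obtain m1 where m1: "lwf VV m1" "holo_eq E (LBr (kill VV t1) s2 :: ('v set,'k) lterm) m1"
    using M_lem[OF wk2(1) s(3)] by blast
  obtain m2 where m2: "lwf VV m2" "holo_eq E (LBr (kill VV t2) s1 :: ('v set,'k) lterm) m2"
    using M_lem[OF wk2(2) s(1)] by blast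
  have "holo_eq E (LBr t1 t2) (LBr (LAdd (kill VV t1) s1) (LAdd (kill VV t2) s2))"
    using s by (intro lie_eq.cong_br)
  also have "holo_eq E \<dots> (LAdd (LBr (kill VV t1) (kill VV t2))
      (LAdd (LBr (kill VV t1) s2) (LAdd (LBr s1 (kill VV t2)) (LBr s1 s2))))"
    using ws wk by (intro lin2) (auto simp: algebra_simps)
  also have "holo_eq E \<dots> (LAdd (LBr (kill VV t1) (kill VV t2))
      (LAdd m1 (LAdd (LSmul (-1) (LBr (kill VV t2) s1)) (LBr s1 s2))))"
    using ws wk m1 by (intro le_intros anti_swap) auto
  also have "holo_eq E \<dots> (LAdd (kill VV (LBr t1 t2))
      (LAdd m1 (LAdd (LSmul (-1) m2) (LBr s1 s2))))"
    using ws wk m1 m2 VV_sub by (simp, intro le_intros) (auto intro: lwf_mono)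
  finally show ?case using s m1 m2 by (intro exI[of _ "LAdd m1 (LAdd (LSmul (-1) m2) (LBr s1 s2))"]) simp
qed

lemma part2:
  assumes t: "lwf E t" and k: "holo_eq E2 (kill VV t) (LZero :: ('v set,'k::field) lterm)"
  shows "\<exists>s. lwf VV s \<and> holo_eq E s t"
proof -
  obtain s where s: "lwf VV s" "holo_eq E t (LAdd (kill VV t) s)" using decomp[OF t] by blast
  have k': "holo_eq E (kill VV t) LZero"
    using lie_eq_mono[OF k E2_sub holo_rels_mono] .
  have "holo_eq E t (LAdd (kill VV t) s)" by (rule s(2))
  also have "holo_eq E \<dots> (LAdd LZero s)" using k' s VV_sub by (intro le_intros) (auto intro: lwf_mono)
  also have "holo_eq E \<dots> s" using s VV_sub by (intro add_zero_left) (auto intro: lwf_mono)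
  finally show ?thesis using s by (intro exI[of _ s]) (simp add: lie_eq.sym)
qed

lemma part1: "lwf VV s \<Longrightarrow> holo_eq E2 (kill VV s) (LZero :: ('v set,'k::field) lterm)"
  by (rule kill_zero)

end

lemma zero_p: "lwf X P \<Longrightarrow> lwf X Q \<Longrightarrow> lwf X R \<Longrightarrow> lie_eq X R0 (LSmul (-1) (LBr P (anti Q R))) LZero"
proof -
  assume w: "lwf X P" "lwf X Q" "lwf X R"
  have "lie_eq X R0 (LSmul (-1) (LBr P (anti Q R))) (LSmul (-1) (LBr P LZero))"
    using w by (intro le_intros anticomm) auto
  also have "lie_eq X R0 \<dots> LZero" using w by (intro lin2) auto
  finally show ?thesis .
qed

lemma zero_q: "lwf X P \<Longrightarrow> lwf X Q \<Longrightarrow> lwf X R \<Longrightarrow> lie_eq X R0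
  (LAdd (LSmul (-1) (jac Q P R)) (LAdd (anti (LBr Q P) R) (LAdd (LSmul (-1) (anti (LBr Q R) P))
     (LAdd (LBr P (anti Q R)) (LBr Q (anti R P)))))) LZero"
proof -
  assume w: "lwf X P" "lwf X Q" "lwf X R"
  have "lie_eq X R0
  (LAdd (LSmul (-1) (jac Q P R)) (LAdd (anti (LBr Q P) R) (LAdd (LSmul (-1) (anti (LBr Q R) P))
     (LAdd (LBr P (anti Q R)) (LBr Q (anti R P))))))
  (LAdd (LSmul (-1) LZero) (LAdd LZero (LAdd (LSmul (-1) LZero)
     (LAdd (LBr P LZero) (LBr Q LZero)))))"
    using w by (intro le_intros anticomm lie_eq.jacobi) auto
  also have "lie_eq X R0 \<dots> LZero" using w by (intro lin2) auto
  finally show ?thesis .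
qed

lemma zero_r: "lwf X P \<Longrightarrow> lwf X Q \<Longrightarrow> lwf X R \<Longrightarrow> lie_eq X R0
  (LAdd (jac R Q P) (LAdd (LSmul (-1) (anti (LBr R Q) P)) (LAdd (anti (LBr R P) Q)
     (LSmul (-1) (LBr Q (anti R P)))))) LZero"
proof -
  assume w: "lwf X P" "lwf X Q" "lwf X R"
  have "lie_eq X R0
  (LAdd (jac R Q P) (LAdd (LSmul (-1) (anti (LBr R Q) P)) (LAdd (anti (LBr R P) Q)
     (LSmul (-1) (LBr Q (anti R P))))))
  (LAdd LZero (LAdd (LSmul (-1) LZero) (LAdd LZero (LSmul (-1) (LBr Q LZero)))))"
    using w by (intro le_intros anticomm lie_eq.jacobi) auto
  also have "lie_eq X R0 \<dots> LZero" using w by (intro lin2) auto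
  finally show ?thesis .
qed

lemma tri_p:
  assumes "fa wp = (if cq then LBr (Gen wp) (Gen wq) else LZero)" "fb wp = LZero"
    "fc wp = (if cr then LBr (Gen wp) (Gen wr) else LZero)"
    "cq \<Longrightarrow> fb wq = (if cr then LBr (Gen wq) (Gen wr) else LZero)"
    "cr \<Longrightarrow> fb wr = (if cq then LBr (Gen wr) (Gen wq) else LZero)"
    "wp \<in> Y" "cq \<Longrightarrow> wq \<in> Y" "cr \<Longrightarrow> wr \<in> Y"
  shows "lie_eq Y {} (lsub (Dext fa (fb wp)) (Dext fb (fa wp)) :: ('a,'k::field) lterm)
                    (lsub (Dext fb (fc wp)) (Dext fc (fb wp)))"
proof (cases cq)
  case True
  note cq = True
  show ?thesis
  proof (cases cr)
    case True
    show ?thesis using assms cq True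
      by simp (rule lin_mod[where z = "LSmul (-1) (LBr (Gen wp) (anti (Gen wq) (Gen wr)))"],
        auto intro: zero_p)
  next
    case False
    show ?thesis using assms cq False by simp (intro lin2, auto)
  qed
next
  case False
  show ?thesis using assms False by (cases cr; simp; intro lin2; auto)
qed

lemma tri_q:
  assumes "fa wq = (if cp then LBr (Gen wq) (Gen wp) else LZero)"
    "fb wq = (if cr then LBr (Gen wq) (Gen wr) else LZero)" "fc wq = LZero"
    "fa wr = LZero" "fb wp = LZero"
    "cr \<Longrightarrow> fc wr = (if cp then LBr (Gen wr) (Gen wp) else LZero)"
    "wq \<in> Y" "cp \<Longrightarrow> wp \<in> Y" "cr \<Longrightarrow> wr \<in> Y"
  shows "lie_eq Y {} (lsub (Dext fa (fb wq)) (Dext fb (fa wq)) :: ('a,'k::field) lterm)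
                    (lsub (Dext fb (fc wq)) (Dext fc (fb wq)))"
proof (cases cp)
  case True
  note cp = True
  show ?thesis
  proof (cases cr)
    case True
    show ?thesis using assms cp True
      by simp (rule lin_mod[where z = "LAdd (LSmul (-1) (jac (Gen wq) (Gen wp) (Gen wr)))
        (LAdd (anti (LBr (Gen wq) (Gen wp)) (Gen wr)) (LAdd (LSmul (-1) (anti (LBr (Gen wq) (Gen wr)) (Gen wp)))
        (LAdd (LBr (Gen wp) (anti (Gen wq) (Gen wr))) (LBr (Gen wq) (anti (Gen wr) (Gen wp))))))"],
        auto simp: algebra_simps intro: zero_q)
  next
    case False
    show ?thesis using assms cp False by simp (intro lin2, auto)
  qed
next
  case False
  show ?thesis using assms False by (cases cr; simp; intro lin2; auto)
qed

lemma tri_r: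
  assumes "fa wr = LZero" "fb wr = (if cq then LBr (Gen wr) (Gen wq) else LZero)"
    "fc wr = (if cp then LBr (Gen wr) (Gen wp) else LZero)"
    "cq \<Longrightarrow> fa wq = (if cp then LBr (Gen wq) (Gen wp) else LZero)"
    "fb wp = LZero" "fc wq = LZero"
    "wr \<in> Y" "cp \<Longrightarrow> wp \<in> Y" "cq \<Longrightarrow> wq \<in> Y"
  shows "lie_eq Y {} (lsub (Dext fa (fb wr)) (Dext fb (fa wr)) :: ('a,'k::field) lterm)
                    (lsub (Dext fb (fc wr)) (Dext fc (fb wr)))"
proof (cases cp)
  case True
  note cp = True
  show ?thesis
  proof (cases cq)
    case True
    show ?thesis using assms cp True
      by simp (rule lin_mod[where z = "LAdd (jac (Gen wr) (Gen wq) (Gen wp))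
         (LAdd (LSmul (-1) (anti (LBr (Gen wr) (Gen wq)) (Gen wp))) (LAdd (anti (LBr (Gen wr) (Gen wp)) (Gen wq))
         (LSmul (-1) (LBr (Gen wq) (anti (Gen wr) (Gen wp))))))"],
        auto simp: algebra_simps intro: zero_r)
  next
    case False
    show ?thesis using assms cp False by simp (intro lin2, auto)
  qed
next
  case False
  show ?thesis using assms False by (cases cq; simp; intro lin2; auto)
qed

lemma zero_neg_anti: "lwf X a \<Longrightarrow> lwf X b \<Longrightarrow> lie_eq X R (LSmul (-1) (anti a b)) LZero"
proof -
  assume w: "lwf X a" "lwf X b"
  have "lie_eq X R (LSmul (-1) (anti a b)) (LSmul (-1) LZero)"
    using w by (intro le_intros anticomm) auto
  also have "lie_eq X R \<dots> LZero" by (intro lin2) auto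
  finally show ?thesis .
qed

context hg
begin

definition fy :: "'v set \<Rightarrow> 'v set \<Rightarrow> ('v set,'k::field) lterm" where
  "fy y w = (if y \<in> E \<and> v \<notin> y \<and> w \<in> VV \<and> w \<inter> y \<noteq> {} \<and> insert v (y - w) \<in> E
     then LBr (Gen w) (Gen (insert v (y - w))) else LZero)"

definition dv :: "'v set \<Rightarrow> ('v set,'k::field) lterm \<Rightarrow> ('v set,'k) lterm" where
  "dv y = (if v \<in> y then (\<lambda>u. LZero) else Dext (fy y))"

definition pg :: "'v set \<Rightarrow> ('v set,'k::field) lterm" where
  "pg y = (if v \<in> y then Gen y else LZero)"

lemma fy_lwf: "lwf VV (fy y w)"
  unfolding fy_def VV_def by auto

lemma H: "\<forall>e\<in>E. isder VV (dv e :: ('v set,'k::field) lterm \<Rightarrow> _) \<and> lwf VV (pg e :: ('v set,'k) lterm)"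
  unfolding dv_def pg_def using fy_lwf by (auto intro!: isder_Dext isder_0 simp: VV_def)

lemma fy_hit: "y = {s,t} \<Longrightarrow> y \<in> E \<Longrightarrow> {v,s} \<in> E \<Longrightarrow> v \<noteq> s \<Longrightarrow> v \<noteq> t \<Longrightarrow> s \<noteq> t \<Longrightarrow>
   fy y {v,s} = (if {v,t} \<in> E then LBr (Gen {v,s}) (Gen {v,t}) else LZero)"
proof -
  assume h: "y = {s,t}" "y \<in> E" "{v,s} \<in> E" "v \<noteq> s" "v \<noteq> t" "s \<noteq> t"
  have d: "y - {v,s} = {t}" using h by auto
  have i: "{v,s} \<inter> y \<noteq> {}" using h by auto
  have vy: "v \<notin> y" using h by auto
  have wV: "{v,s} \<in> VV" using h by (simp add: VV_def)
  have sy: "s \<in> y" using h by auto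
  show ?thesis by (simp add: fy_def d i vy wV h(2) sy)
qed

lemma fy_miss: "s \<notin> y \<Longrightarrow> v \<notin> y \<Longrightarrow> fy y {v,s} = LZero"
  unfolding fy_def by auto

lemma fy_form:
  assumes "fy y w \<noteq> LZero"
  shows "\<exists>s t. w = {v,s} \<and> y = {s,t} \<and> s \<noteq> v \<and> t \<noteq> v \<and> s \<noteq> t \<and> {v,s} \<in> E \<and> {v,t} \<in> E \<and> y \<in> E
     \<and> fy y w = LBr (Gen {v,s}) (Gen {v,t})"
proof -
  have cond: "y \<in> E \<and> v \<notin> y \<and> w \<in> VV \<and> w \<inter> y \<noteq> {} \<and> insert v (y - w) \<in> E"
    using assms unfolding fy_def by (simp split: if_splits)
  then have c: "y \<in> E" "v \<notin> y" "w \<in> VV" "w \<inter> y \<noteq> {}" "insert v (y - w) \<in> E" by auto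
  have f: "fy y w = LBr (Gen w) (Gen (insert v (y - w)))"
    unfolding fy_def by (rule if_P[OF cond])
  obtain s where s: "s \<noteq> v" "w = {v,s}" "{v,s} \<in> E" using VV_form[OF c(3)] by blast
  have sy: "s \<in> y" using c(2,4) s(2) by auto
  obtain t where t: "t \<noteq> s" "y = {s,t}" using edge_at[OF c(1) sy] by blast
  have tv: "t \<noteq> v" using c(2) t(2) by auto
  have d: "y - w = {t}" using s t tv by auto
  have i: "insert v (y - w) = {v,t}" using d by simp
  have vt: "{v,t} \<in> E" using c(5) i by simp
  have f2: "fy y w = LBr (Gen {v,s}) (Gen {v,t})" using f i s(2) by simp
  show ?thesis
    apply (rule exI[of _ s], rule exI[of _ t])
    using s t tv vt c(1) f2 by blast
qed

lemma fy_tri: "fy y x \<noteq> LZero \<Longrightarrow> \<exists>T. triangle E T \<and> x \<in> T \<and> y \<in> T"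
proof -
  assume "fy y x \<noteq> LZero"
  then obtain s t where h: "x = {v,s}" "y = {s,t}" "s \<noteq> v" "t \<noteq> v" "s \<noteq> t" "{v,s} \<in> E" "{v,t} \<in> E" "y \<in> E"
    using fy_form by blast
  have "triangle E {{v,s},{s,t},{v,t}}" using h by (intro triangle_intro) auto
  then show ?thesis by (intro exI[of _ "{{v,s},{s,t},{v,t}}"]) (simp add: h(1,2))
qed

lemma DD0:
  assumes xy: "x \<noteq> y" and nt: "\<not> (\<exists>T. triangle E T \<and> x \<in> T \<and> y \<in> T)"
  shows "lie_eq VV {} (Dext (fy x) (fy y w) :: ('v set,'k::field) lterm) LZero"
proof (cases "fy y w = (LZero :: ('v set,'k) lterm)")
  case True
  then show ?thesis by (simp add: lie_eq.refl)
next
  case False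
  then obtain s t where h: "w = {v,s}" "y = {s,t}" "s \<noteq> v" "t \<noteq> v" "s \<noteq> t" "{v,s} \<in> E" "{v,t} \<in> E" "y \<in> E"
     "fy y w = (LBr (Gen {v,s}) (Gen {v,t}) :: ('v set,'k) lterm)"
    using fy_form by blast
  have z1: "fy x {v,s} = (LZero :: ('v set,'k) lterm)"
  proof (rule ccontr)
    assume "fy x {v,s} \<noteq> (LZero :: ('v set,'k) lterm)"
    then obtain s' r where g: "{v,s} = {v,s'}" "x = {s',r}" "s' \<noteq> v" "r \<noteq> v" "s' \<noteq> r" "{v,r} \<in> E" "x \<in> E"
      using fy_form by blast
    have "s' = s" using g(1) h(3) g(3) by (auto simp: doubleton_eq_iff)
    then have rt: "t \<noteq> r" using xy g(2) h(2) by auto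
    have "{t,r} \<in> E" by (rule K'[OF h(7) g(6) rt])
    moreover have "{s,r} \<in> E" using g(2,7) \<open>s' = s\<close> by simp
    ultimately have tri: "triangle E {{s,t},{t,r},{s,r}}" using h g(4,5) \<open>s' = s\<close> rt
      by (intro triangle_intro) auto
    have "x \<in> {{s,t},{t,r},{s,r}}" "y \<in> {{s,t},{t,r},{s,r}}" using g(2) h(2) \<open>s' = s\<close> by auto
    then show False using nt tri by blast
  qed
  have z2: "fy x {v,t} = (LZero :: ('v set,'k) lterm)"
  proof (rule ccontr)
    assume "fy x {v,t} \<noteq> (LZero :: ('v set,'k) lterm)"
    then obtain t' r where g: "{v,t} = {v,t'}" "x = {t',r}" "t' \<noteq> v" "r \<noteq> v" "t' \<noteq> r" "{v,r} \<in> E" "x \<in> E"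
      using fy_form by blast
    have "t' = t" using g(1) h(4) g(3) by (auto simp: doubleton_eq_iff)
    then have rs: "s \<noteq> r" using xy g(2) h(2) by auto
    have "{s,r} \<in> E" by (rule K'[OF h(6) g(6) rs])
    moreover have "{t,r} \<in> E" using g(2,7) \<open>t' = t\<close> by simp
    ultimately have tri: "triangle E {{s,t},{t,r},{s,r}}" using h g(4,5) \<open>t' = t\<close> rs
      by (intro triangle_intro) auto
    have "x \<in> {{s,t},{t,r},{s,r}}" "y \<in> {{s,t},{t,r},{s,r}}" using g(2) h(2) \<open>t' = t\<close> by auto
    then show False using nt tri by blast
  qed
  have w: "{v,s} \<in> VV" "{v,t} \<in> VV" using h unfolding VV_def by auto
  show ?thesis using h(9) z1 z2 w by simp (intro lin2, auto)
qed

lemma act_br: "act dv (LBr (Gen x) (Gen y)) = (\<lambda>u. lsub (dv x (dv y u)) (dv y (dv x u)))"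
  by simp

lemma rel_case1:
  assumes x: "x \<in> E" and y: "y \<in> E" and xy: "x \<noteq> y" and nt: "\<not> (\<exists>T. triangle E T \<and> x \<in> T \<and> y \<in> T)"
  shows "opeq VV (act dv (LBr (Gen x) (Gen y))) (act dv (LZero :: ('v set,'k::field) lterm)) \<and>
     lie_eq VV {} (Pm dv pg (LBr (Gen x) (Gen y))) (Pm dv pg (LZero :: ('v set,'k) lterm))"
proof -
  have nt': "\<not> (\<exists>T. triangle E T \<and> y \<in> T \<and> x \<in> T)" using nt by blast
  consider "v \<in> x" "v \<in> y" | "v \<in> x" "v \<notin> y" | "v \<notin> x" "v \<in> y" | "v \<notin> x" "v \<notin> y" by blast
  then show ?thesis
  proof cases
    case 1
    obtain a where a: "a \<noteq> v" "x = {v,a}" using edge_at[OF x 1(1)] by blast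
    obtain b where b: "b \<noteq> v" "y = {v,b}" using edge_at[OF y 1(2)] by blast
    have "a \<noteq> b" using xy a b by auto
    then have "{a,b} \<in> E" using K' x y a b by blast
    then have "triangle E {{v,a},{a,b},{v,b}}" using a b x y \<open>a \<noteq> b\<close> by (intro triangle_intro) auto
    then show ?thesis using nt a b by blast
  next
    case 2
    have "fy y x = (LZero :: ('v set,'k) lterm)" using fy_tri nt by blast
    then show ?thesis using 2 x unfolding opeq_def dv_def pg_def
      by (simp add: VV_def) (intro conjI allI impI lin2, auto)
  next
    case 3
    have "fy x y = (LZero :: ('v set,'k) lterm)" using fy_tri nt' by blast
    then show ?thesis using 3 y unfolding opeq_def dv_def pg_def
      by (simp add: VV_def) (intro conjI allI impI lin2, auto)
  next
    case 4
    have Dx: "isder VV (Dext (fy x) :: ('v set,'k) lterm \<Rightarrow> _)" and Dy: "isder VV (Dext (fy y) :: ('v set,'k) lterm \<Rightarrow> _)"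
      using fy_lwf by (auto intro!: isder_Dext)
    have "opeq VV (\<lambda>u. lsub (Dext (fy x) (Dext (fy y) u)) (Dext (fy y) (Dext (fy x) u)))
       (\<lambda>u. (LZero :: ('v set,'k) lterm))"
    proof (rule der_unique[OF isder_comm[OF Dx Dy] isder_0], intro ballI)
      fix w assume w: "w \<in> VV"
      have "lie_eq VV {} (lsub (Dext (fy x) (fy y w)) (Dext (fy y) (fy x w)))
          (lsub (LZero :: ('v set,'k) lterm) LZero)"
        using DD0[OF xy nt] DD0[OF xy[symmetric] nt'] by (intro le_intros) auto
      also have "lie_eq VV {} \<dots> LZero" by (intro lin2) auto
      finally show "lie_eq VV {} (lsub (Dext (fy x) (Dext (fy y) (Gen w))) (Dext (fy y) (Dext (fy x) (Gen w))))
         ((\<lambda>u. (LZero :: ('v set,'k) lterm)) (Gen w))" by simp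
    qed
    moreover have "lie_eq VV {} (Pm dv pg (LBr (Gen x) (Gen y))) (Pm dv pg (LZero :: ('v set,'k) lterm))"
      using 4 unfolding dv_def pg_def by simp (intro lin2, auto)
    ultimately show ?thesis using 4 unfolding dv_def by simp
  qed
qed

end

context hg
begin

lemma tri_lab:
  assumes T: "triangle E {a,b,c}" and d: "a \<noteq> b" "b \<noteq> c" "a \<noteq> c"
  shows "\<exists>p q r. p \<noteq> q \<and> q \<noteq> r \<and> p \<noteq> r \<and> a = {p,q} \<and> b = {q,r} \<and> c = {p,r}"
proof -
  obtain x y z where xyz: "x \<noteq> y" "y \<noteq> z" "x \<noteq> z" "{a,b,c} = {{x,y},{y,z},{x,z}}"
    using tri_parts[OF T] by blast
  have "a \<in> {a,b,c}" "b \<in> {a,b,c}" "c \<in> {a,b,c}" by simp_all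
  then have "a \<in> {{x,y},{y,z},{x,z}}" "b \<in> {{x,y},{y,z},{x,z}}" "c \<in> {{x,y},{y,z},{x,z}}"
    unfolding xyz(4) .
  then have ma: "a = {x,y} \<or> a = {y,z} \<or> a = {x,z}" and mb: "b = {x,y} \<or> b = {y,z} \<or> b = {x,z}"
    and mc: "c = {x,y} \<or> c = {y,z} \<or> c = {x,z}" by simp_all
  consider (1) "a = {x,y}" "b = {y,z}" "c = {x,z}" | (2) "a = {x,y}" "b = {x,z}" "c = {y,z}"
    | (3) "a = {y,z}" "b = {x,y}" "c = {x,z}" | (4) "a = {y,z}" "b = {x,z}" "c = {x,y}"
    | (5) "a = {x,z}" "b = {x,y}" "c = {y,z}" | (6) "a = {x,z}" "b = {y,z}" "c = {x,y}"
    using ma mb mc d by (elim disjE; simp)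
  then show ?thesis
  proof cases
    case 1 then show ?thesis using xyz by (intro exI[of _ x] exI[of _ y] exI[of _ z]) simp_all
  next
    case 2 then show ?thesis using xyz by (intro exI[of _ y] exI[of _ x] exI[of _ z]) (simp_all add: insert_commute)
  next
    case 3 then show ?thesis using xyz by (intro exI[of _ z] exI[of _ y] exI[of _ x]) (simp_all add: insert_commute)
  next
    case 4 then show ?thesis using xyz by (intro exI[of _ y] exI[of _ z] exI[of _ x]) (simp_all add: insert_commute)
  next
    case 5 then show ?thesis using xyz by (intro exI[of _ z] exI[of _ x] exI[of _ y]) (simp_all add: insert_commute)
  next
    case 6 then show ?thesis using xyz by (intro exI[of _ x] exI[of _ z] exI[of _ y]) (simp_all add: insert_commute)
  qed
qed

lemma tri_pqr:
  assumes pqr: "p \<noteq> q" "q \<noteq> r" "p \<noteq> r" and a: "a = {p,q}" and b: "b = {q,r}" and c: "c = {p,r}"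
    and aE: "a \<in> E" and bE: "b \<in> E" and cE: "c \<in> E"
  shows "opeq VV (act dv (LBr (Gen a) (Gen b))) (act dv (LBr (Gen b) (Gen c) :: ('v set,'k::field) lterm)) \<and>
     lie_eq VV {} (Pm dv pg (LBr (Gen a) (Gen b))) (Pm dv pg (LBr (Gen b) (Gen c) :: ('v set,'k) lterm))"
proof -
  consider "v = q" | "v = p" | "v = r" | "v \<noteq> p" "v \<noteq> q" "v \<noteq> r" by blast
  then show ?thesis
  proof cases
    case 1
    have va: "v \<in> a" and vb: "v \<in> b" and vc: "v \<notin> c" using 1 a b c pqr by auto
    have aq: "a = {v,p}" and bq: "b = {v,r}" using a b 1 by auto
    have "fy c {v,r} = (if {v,p} \<in> E then LBr (Gen {v,r}) (Gen {v,p}) else (LZero :: ('v set,'k) lterm))"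
      by (rule fy_hit) (use c cE bE bq 1 pqr in auto)
    then have f: "fy c b = (LBr (Gen b) (Gen a) :: ('v set,'k) lterm)" using aq bq aE by simp
    have wa: "a \<in> VV" "b \<in> VV" using va vb aE bE unfolding VV_def by auto
    have "opeq VV (act dv (LBr (Gen a) (Gen b))) (act dv (LBr (Gen b) (Gen c) :: ('v set,'k) lterm))"
      unfolding opeq_def using va vb vc by (simp add: dv_def lie_eq.refl)
    moreover have "lie_eq VV {} (Pm dv pg (LBr (Gen a) (Gen b))) (Pm dv pg (LBr (Gen b) (Gen c) :: ('v set,'k) lterm))"
      using va vb vc f wa
      by (simp add: dv_def pg_def) (rule lin_mod[where z = "anti (Gen a) (Gen b)"], auto intro: anticomm)
    ultimately show ?thesis by blast
  next
    case 2
    have va: "v \<in> a" and vb: "v \<notin> b" and vc: "v \<in> c" using 2 a b c pqr by auto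
    have ap: "a = {v,q}" and cp: "c = {v,r}" using a c 2 by auto
    have "fy b {v,q} = (if {v,r} \<in> E then LBr (Gen {v,q}) (Gen {v,r}) else (LZero :: ('v set,'k) lterm))"
      by (rule fy_hit) (use b bE aE ap 2 pqr in auto)
    then have f1: "fy b a = (LBr (Gen a) (Gen c) :: ('v set,'k) lterm)" using ap cp cE by simp
    have "fy b {v,r} = (if {v,q} \<in> E then LBr (Gen {v,r}) (Gen {v,q}) else (LZero :: ('v set,'k) lterm))"
      by (rule fy_hit) (use b bE cE cp 2 pqr in auto)
    then have f2: "fy b c = (LBr (Gen c) (Gen a) :: ('v set,'k) lterm)" using ap cp aE by simp
    have wa: "a \<in> VV" "c \<in> VV" using va vc aE cE unfolding VV_def by auto
    have "opeq VV (act dv (LBr (Gen a) (Gen b))) (act dv (LBr (Gen b) (Gen c) :: ('v set,'k) lterm))"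
      unfolding opeq_def using va vb vc by (simp add: dv_def lie_eq.refl)
    moreover have "lie_eq VV {} (Pm dv pg (LBr (Gen a) (Gen b))) (Pm dv pg (LBr (Gen b) (Gen c) :: ('v set,'k) lterm))"
      using va vb vc f1 f2 wa
      by (simp add: dv_def pg_def) (rule lin_mod[where z = "LSmul (-1) (anti (Gen a) (Gen c))"], auto intro: zero_neg_anti)
    ultimately show ?thesis by blast
  next
    case 3
    have va: "v \<notin> a" and vb: "v \<in> b" and vc: "v \<in> c" using 3 a b c pqr by auto
    have br: "b = {v,q}" and cr: "c = {v,p}" using b c 3 by auto
    have "fy a {v,q} = (if {v,p} \<in> E then LBr (Gen {v,q}) (Gen {v,p}) else (LZero :: ('v set,'k) lterm))"
      by (rule fy_hit) (use a aE bE br 3 pqr in auto)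
    then have f: "fy a b = (LBr (Gen b) (Gen c) :: ('v set,'k) lterm)" using br cr cE by simp
    have wa: "b \<in> VV" "c \<in> VV" using vb vc bE cE unfolding VV_def by auto
    have "opeq VV (act dv (LBr (Gen a) (Gen b))) (act dv (LBr (Gen b) (Gen c) :: ('v set,'k) lterm))"
      unfolding opeq_def using va vb vc by (simp add: dv_def lie_eq.refl)
    moreover have "lie_eq VV {} (Pm dv pg (LBr (Gen a) (Gen b))) (Pm dv pg (LBr (Gen b) (Gen c) :: ('v set,'k) lterm))"
      using va vb vc f wa
      by (simp add: dv_def pg_def) (intro lin2, auto)
    ultimately show ?thesis by blast
  next
    case 4
    have va: "v \<notin> a" and vb: "v \<notin> b" and vc: "v \<notin> c" using 4 a b c by auto
    have Da: "isder VV (Dext (fy a) :: ('v set,'k) lterm \<Rightarrow> _)"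
     and Db: "isder VV (Dext (fy b) :: ('v set,'k) lterm \<Rightarrow> _)"
     and Dc: "isder VV (Dext (fy c) :: ('v set,'k) lterm \<Rightarrow> _)"
      using fy_lwf by (auto intro!: isder_Dext)
    have "opeq VV (\<lambda>u. lsub (Dext (fy a) (Dext (fy b) u)) (Dext (fy b) (Dext (fy a) u)))
       (\<lambda>u. lsub (Dext (fy b) (Dext (fy c) u)) (Dext (fy c) (Dext (fy b) u)) :: ('v set,'k) lterm)"
    proof (rule der_unique[OF isder_comm[OF Da Db] isder_comm[OF Db Dc]], intro ballI)
      fix w assume w: "w \<in> VV"
      obtain s where s: "s \<noteq> v" "w = {v,s}" "{v,s} \<in> E" using VV_form[OF w] by blast
      have "lie_eq VV {} (lsub (Dext (fy a) (fy b w)) (Dext (fy b) (fy a w)))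
               (lsub (Dext (fy b) (fy c w)) (Dext (fy c) (fy b w)) :: ('v set,'k) lterm)"
      proof -
        consider "s = p" | "s = q" | "s = r" | "s \<noteq> p" "s \<noteq> q" "s \<noteq> r" by blast
        then show ?thesis
        proof cases
          case 1
          show ?thesis unfolding s(2) 1
          proof (rule tri_p[where cq = "{v,q} \<in> E" and cr = "{v,r} \<in> E" and wq = "{v,q}" and wr = "{v,r}"])
            show "fy a {v,p} = (if {v,q} \<in> E then LBr (Gen {v,p}) (Gen {v,q}) else LZero)"
              by (rule fy_hit) (use a aE s 1 4 pqr in auto)
            show "fy b {v,p} = LZero" by (rule fy_miss) (use b 4 pqr in auto)
            show "fy c {v,p} = (if {v,r} \<in> E then LBr (Gen {v,p}) (Gen {v,r}) else LZero)"
              by (rule fy_hit) (use c cE s 1 4 pqr in auto)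
            show "fy b {v,q} = (if {v,r} \<in> E then LBr (Gen {v,q}) (Gen {v,r}) else LZero)" if "{v,q} \<in> E"
              by (rule fy_hit) (use b bE that 4 pqr in auto)
            show "fy b {v,r} = (if {v,q} \<in> E then LBr (Gen {v,r}) (Gen {v,q}) else LZero)" if "{v,r} \<in> E"
              by (rule fy_hit) (use b bE that 4 pqr in auto)
            show "{v,p} \<in> VV" using s 1 unfolding VV_def by auto
            show "{v,q} \<in> VV" if "{v,q} \<in> E" using that unfolding VV_def by auto
            show "{v,r} \<in> VV" if "{v,r} \<in> E" using that unfolding VV_def by auto
          qed
        next
          case 2
          show ?thesis unfolding s(2) 2
          proof (rule tri_q[where cp = "{v,p} \<in> E" and cr = "{v,r} \<in> E" and wp = "{v,p}" and wr = "{v,r}"])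
            show "fy a {v,q} = (if {v,p} \<in> E then LBr (Gen {v,q}) (Gen {v,p}) else LZero)"
              by (rule fy_hit) (use a aE s 2 4 pqr in auto)
            show "fy b {v,q} = (if {v,r} \<in> E then LBr (Gen {v,q}) (Gen {v,r}) else LZero)"
              by (rule fy_hit) (use b bE s 2 4 pqr in auto)
            show "fy c {v,q} = LZero" by (rule fy_miss) (use c 4 pqr in auto)
            show "fy a {v,r} = LZero" by (rule fy_miss) (use a 4 pqr in auto)
            show "fy b {v,p} = LZero" by (rule fy_miss) (use b 4 pqr in auto)
            show "fy c {v,r} = (if {v,p} \<in> E then LBr (Gen {v,r}) (Gen {v,p}) else LZero)" if "{v,r} \<in> E"
              by (rule fy_hit) (use c cE that 4 pqr in auto)
            show "{v,q} \<in> VV" using s 2 unfolding VV_def by auto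
            show "{v,p} \<in> VV" if "{v,p} \<in> E" using that unfolding VV_def by auto
            show "{v,r} \<in> VV" if "{v,r} \<in> E" using that unfolding VV_def by auto
          qed
        next
          case 3
          show ?thesis unfolding s(2) 3
          proof (rule tri_r[where cp = "{v,p} \<in> E" and cq = "{v,q} \<in> E" and wp = "{v,p}" and wq = "{v,q}"])
            show "fy a {v,r} = LZero" by (rule fy_miss) (use a 4 pqr in auto)
            show "fy b {v,r} = (if {v,q} \<in> E then LBr (Gen {v,r}) (Gen {v,q}) else LZero)"
              by (rule fy_hit) (use b bE s 3 4 pqr in auto)
            show "fy c {v,r} = (if {v,p} \<in> E then LBr (Gen {v,r}) (Gen {v,p}) else LZero)"
              by (rule fy_hit) (use c cE s 3 4 pqr in auto)
            show "fy a {v,q} = (if {v,p} \<in> E then LBr (Gen {v,q}) (Gen {v,p}) else LZero)" if "{v,q} \<in> E"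
              by (rule fy_hit) (use a aE that 4 pqr in auto)
            show "fy b {v,p} = LZero" by (rule fy_miss) (use b 4 pqr in auto)
            show "fy c {v,q} = LZero" by (rule fy_miss) (use c 4 pqr in auto)
            show "{v,r} \<in> VV" using s 3 unfolding VV_def by auto
            show "{v,p} \<in> VV" if "{v,p} \<in> E" using that unfolding VV_def by auto
            show "{v,q} \<in> VV" if "{v,q} \<in> E" using that unfolding VV_def by auto
          qed
        next
          case 5: 4
          have "fy a w = (LZero :: ('v set,'k) lterm)" "fy b w = (LZero :: ('v set,'k) lterm)"
            "fy c w = (LZero :: ('v set,'k) lterm)"
            unfolding s(2) by (rule fy_miss; use a b c 5 4 in auto)+
          then show ?thesis by (simp add: lie_eq.refl)
        qed
      qed
      then show "lie_eq VV {} (lsub (Dext (fy a) (Dext (fy b) (Gen w))) (Dext (fy b) (Dext (fy a) (Gen w))))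
         (lsub (Dext (fy b) (Dext (fy c) (Gen w))) (Dext (fy c) (Dext (fy b) (Gen w))) :: ('v set,'k) lterm)" by simp
    qed
    then have "opeq VV (act dv (LBr (Gen a) (Gen b))) (act dv (LBr (Gen b) (Gen c) :: ('v set,'k) lterm))"
      using va vb vc by (simp add: dv_def)
    moreover have "lie_eq VV {} (Pm dv pg (LBr (Gen a) (Gen b))) (Pm dv pg (LBr (Gen b) (Gen c) :: ('v set,'k) lterm))"
      using va vb vc by (simp add: dv_def pg_def) (intro lin2, auto)
    ultimately show ?thesis by blast
  qed
qed

end

context hg
begin

lemma Rel:
  assumes st: "(s,t) \<in> (holo_rels E :: (('v set,'k::field) lterm \<times> _) set)"
  shows "opeq VV (act dv s) (act dv t) \<and> lie_eq VV {} (Pm dv pg s) (Pm dv pg t)"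
proof -
  have "(s,t) \<in> {(LBr (Gen x) (Gen y), LZero) | x y. x \<in> E \<and> y \<in> E \<and> x \<noteq> y \<and>
         \<not> (\<exists>T. triangle E T \<and> x \<in> T \<and> y \<in> T)} \<or>
     (s,t) \<in> {(LBr (Gen a) (Gen b), LBr (Gen b) (Gen c)) | a b c.
         a \<noteq> b \<and> b \<noteq> c \<and> a \<noteq> c \<and> triangle E {a, b, c}} \<or>
     (s,t) \<in> {(LBr (Gen b) (Gen c), LBr (Gen c) (Gen a)) | a b c.
         a \<noteq> b \<and> b \<noteq> c \<and> a \<noteq> c \<and> triangle E {a, b, c}}"
    using st unfolding holo_rels_def Un_iff by blast
  then show ?thesis
  proof (elim disjE)
    assume "(s,t) \<in> {(LBr (Gen x) (Gen y), LZero) | x y. x \<in> E \<and> y \<in> E \<and> x \<noteq> y \<and>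
         \<not> (\<exists>T. triangle E T \<and> x \<in> T \<and> y \<in> T)}"
    then obtain x y where A: "(s,t) = (LBr (Gen x) (Gen y), LZero)" "x \<in> E" "y \<in> E" "x \<noteq> y"
        "\<not> (\<exists>T. triangle E T \<and> x \<in> T \<and> y \<in> T)"
      by (elim CollectE exE conjE) (rule that; assumption)
    then show ?thesis using rel_case1[OF A(2-5)] by simp
  next
    assume "(s,t) \<in> {(LBr (Gen a) (Gen b), LBr (Gen b) (Gen c)) | a b c.
         a \<noteq> b \<and> b \<noteq> c \<and> a \<noteq> c \<and> triangle E {a, b, c}}"
    then obtain a b c where B: "(s,t) = (LBr (Gen a) (Gen b), LBr (Gen b) (Gen c))" "a \<noteq> b" "b \<noteq> c" "a \<noteq> c"
        "triangle E {a, b, c}"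
      by (elim CollectE exE conjE) (rule that; assumption)
    obtain p q r where pqr: "p \<noteq> q" "q \<noteq> r" "p \<noteq> r" "a = {p,q}" "b = {q,r}" "c = {p,r}"
      using tri_lab[OF B(5) B(2-4)] by blast
    have E: "a \<in> E" "b \<in> E" "c \<in> E" using B(5) unfolding triangle_def by auto
    show ?thesis using tri_pqr[OF pqr E] B(1) by simp
  next
    assume "(s,t) \<in> {(LBr (Gen b) (Gen c), LBr (Gen c) (Gen a)) | a b c.
         a \<noteq> b \<and> b \<noteq> c \<and> a \<noteq> c \<and> triangle E {a, b, c}}"
    then obtain a b c where C: "(s,t) = (LBr (Gen b) (Gen c), LBr (Gen c) (Gen a))" "a \<noteq> b" "b \<noteq> c" "a \<noteq> c"
        "triangle E {a, b, c}"
      by (elim CollectE exE conjE) (rule that; assumption)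
    have "{b,c,a} = {a,b,c}" by auto
    then have T: "triangle E {b,c,a}" using C(5) by simp
    obtain p q r where pqr: "p \<noteq> q" "q \<noteq> r" "p \<noteq> r" "b = {p,q}" "c = {q,r}" "a = {p,r}"
      using tri_lab[OF T C(3) C(4)[symmetric] C(2)[symmetric]] by blast
    have E: "b \<in> E" "c \<in> E" "a \<in> E" using C(5) unfolding triangle_def by auto
    show ?thesis using tri_pqr[OF pqr E] C(1) by simp
  qed
qed

lemma Pm_V: "lwf VV s \<Longrightarrow> opeq VV (act dv s) (\<lambda>u. LZero) \<and> lie_eq VV {} (Pm dv pg s) (s :: ('v set,'k::field) lterm)"
proof (induction s)
  case (Gen e)
  then have "v \<in> e" unfolding VV_def by auto
  then show ?case using Gen unfolding opeq_def by (simp add: dv_def pg_def lie_eq.refl)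
next
  case LZero
  then show ?case unfolding opeq_def by (simp add: lie_eq.refl)
next
  case (LAdd s t)
  then have IH: "opeq VV (act dv s) (\<lambda>u. LZero)" "lie_eq VV {} (Pm dv pg s) s"
    "opeq VV (act dv t) (\<lambda>u. LZero)" "lie_eq VV {} (Pm dv pg t) t" by auto
  have "opeq VV (act dv (LAdd s t)) (\<lambda>u. (LZero :: ('v set,'k) lterm))"
    unfolding opeq_def
  proof (intro allI impI)
    fix u :: "('v set,'k) lterm" assume u: "lwf VV u"
    have "lie_eq VV {} (act dv (LAdd s t) u) (LAdd LZero LZero)"
      using IH u unfolding opeq_def by (simp add: lie_eq.cong_add)
    also have "lie_eq VV {} \<dots> LZero" by (intro lin2) auto
    finally show "lie_eq VV {} (act dv (LAdd s t) u) LZero" .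
  qed
  then show ?case using IH by (simp add: lie_eq.cong_add)
next
  case (LSmul c s)
  then have IH: "opeq VV (act dv s) (\<lambda>u. LZero)" "lie_eq VV {} (Pm dv pg s) s" by auto
  have "opeq VV (act dv (LSmul c s)) (\<lambda>u. (LZero :: ('v set,'k) lterm))"
    unfolding opeq_def
  proof (intro allI impI)
    fix u :: "('v set,'k) lterm" assume u: "lwf VV u"
    have "lie_eq VV {} (act dv (LSmul c s) u) (LSmul c LZero)"
      using IH u unfolding opeq_def by (simp add: lie_eq.cong_smul)
    also have "lie_eq VV {} \<dots> LZero" by (intro lin2) auto
    finally show "lie_eq VV {} (act dv (LSmul c s) u) LZero" .
  qed
  then show ?case using IH by (simp add: lie_eq.cong_smul)
next
  case (LBr s t)
  then have IH: "opeq VV (act dv s) (\<lambda>u. LZero)" "lie_eq VV {} (Pm dv pg s) s"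
    "opeq VV (act dv t) (\<lambda>u. LZero)" "lie_eq VV {} (Pm dv pg t) t" and w: "lwf VV s" "lwf VV t" by auto
  have wE: "lwf E s" "lwf E t" using w VV_sub lwf_mono by auto
  have S: "isder VV (act dv s :: ('v set,'k) lterm \<Rightarrow> _)" "lwf VV (Pm dv pg s :: ('v set,'k) lterm)"
    using good[OF H wE(1)] by auto
  have T: "isder VV (act dv t :: ('v set,'k) lterm \<Rightarrow> _)" "lwf VV (Pm dv pg t :: ('v set,'k) lterm)"
    using good[OF H wE(2)] by auto
  have "opeq VV (act dv (LBr s t)) (\<lambda>u. (LZero :: ('v set,'k) lterm))"
    unfolding opeq_def
  proof (intro allI impI)
    fix u :: "('v set,'k) lterm" assume u: "lwf VV u"
    have "lie_eq VV {} (act dv (LBr s t) u) (lsub LZero LZero)"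
      using IH u isderD(1)[OF S(1)] isderD(1)[OF T(1)] unfolding opeq_def by (simp add: le_intros)
    also have "lie_eq VV {} \<dots> LZero" by (intro lin2) auto
    finally show "lie_eq VV {} (act dv (LBr s t) u) LZero" .
  qed
  moreover have "lie_eq VV {} (Pm dv pg (LBr s t)) (LBr s t)"
  proof -
    have "lie_eq VV {} (Pm dv pg (LBr s t)) (LAdd (lsub LZero LZero) (LBr s t))"
      using IH S T unfolding opeq_def by (simp add: le_intros)
    also have "lie_eq VV {} \<dots> (LBr s t)" using w by (intro lin2) auto
    finally show ?thesis .
  qed
  ultimately show ?case by blast
qed

lemma part3:
  assumes s: "lwf VV s" and s': "lwf VV s'"
  shows "holo_eq E s s' \<longleftrightarrow> lie_eq VV {} s (s' :: ('v set,'k::field) lterm)"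
proof
  assume h: "holo_eq E s s'"
  have "lie_eq VV {} (Pm dv pg s) (Pm dv pg s')"
    using semi[OF H, of "holo_rels E" s s'] Rel h by blast
  then show "lie_eq VV {} s s'"
    using Pm_V[OF s] Pm_V[OF s'] by (meson lie_eq.sym lie_eq.trans)
next
  assume "lie_eq VV {} s s'"
  then show "holo_eq E s s'" by (rule lie_eq_mono) (use VV_sub in auto)
qed

end

theorem mainTheorem4:
  fixes Vs :: "'v set" and E :: "'v set set" and v :: 'v
  assumes graph: "simple_graph Vs E"
    and vertex: "v \<in> Vs"
    and K_complete: "\<forall>a b. {a, v} \<in> E \<longrightarrow> {b, v} \<in> E \<longrightarrow> a \<noteq> b \<longrightarrow> {a, b} \<in> E"
  defines "V \<equiv> {e \<in> E. v \<in> e}"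
    and "E2 \<equiv> E - {e \<in> E. v \<in> e}"
  shows
    \<comment> \<open>the generators in V (and hence the Lie subalgebra they generate) lie in ker \<pi>\<close>
    "(\<forall>s::('v set, 'k::field) lterm. lwf V s \<longrightarrow> holo_eq E2 (kill V s) LZero)
     \<comment> \<open>ker \<pi> is generated, as a Lie algebra, by the images of the edges in V\<close>
   \<and> (\<forall>t::('v set, 'k) lterm. lwf E t \<and> holo_eq E2 (kill V t) LZero \<longrightarrow>
        (\<exists>s. lwf V s \<and> holo_eq E s t))
     \<comment> \<open>the canonical map from the free Lie algebra on V into L_G is injective\<close>
   \<and> (\<forall>s s'::('v set, 'k) lterm. lwf V s \<and> lwf V s' \<longrightarrow>
        (holo_eq E s s' \<longleftrightarrow> lie_eq V {} s s'))"
proof -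
  have hg: "hg Vs E v" unfolding hg_def using graph K_complete by blast
  have VVe: "hg.VV E v = V" by (simp add: hg.VV_def[OF hg] V_def)
  have E2e: "hg.E2 E v = E2" by (simp add: hg.E2_def[OF hg] E2_def)
  have P1: "\<forall>s::('v set, 'k::field) lterm. lwf V s \<longrightarrow> holo_eq E2 (kill V s) LZero"
    using hg.part1[OF hg] unfolding VVe E2e by blast
  have P2: "\<forall>t::('v set, 'k) lterm. lwf E t \<and> holo_eq E2 (kill V t) LZero \<longrightarrow>
        (\<exists>s. lwf V s \<and> holo_eq E s t)"
    using hg.part2[OF hg] unfolding VVe E2e by blast
  have P3: "\<forall>s s'::('v set, 'k) lterm. lwf V s \<and> lwf V s' \<longrightarrow>
        (holo_eq E s s' \<longleftrightarrow> lie_eq V {} s s')"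
    using hg.part3[OF hg] unfolding VVe by blast
  show ?thesis using P1 P2 P3 by blast
qed

end
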